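(* Let $n\ge2$ and let $U^+$ be the subalgebra of $U_{r,s}(\mathfrak{so}_{2n+1})$ generated by $e_1,\dots,e_n$, with root vectors as in the context. Then in $U^+$: (1) $\mathcal E_{i,n}\mathcal E_{j,n}-rs\,\mathcal E_{j,n}\mathcal E_{i,n}=\mathcal E_{j,n-1}\mathcal E_{i,n'}-r^2\mathcal E_{i,n'}\mathcal E_{j,n-1}$ for $i<j<n$; (2) $\mathcal E_{j,k}\mathcal E_{i,(k+1)'}-r^2\mathcal E_{i,(k+1)'}\mathcal E_{j,k}=\mathcal E_{i,(k+2)'}\mathcal E_{j,k+1}-s^{-2}\mathcal E_{j,k+1}\mathcal E_{i,(k+2)'}$ for $i<j<k<n-1$; (3) $\mathcal E_{n-1,n}\mathcal E_{n-1,n'}=s^2\mathcal E_{n-1,n'}\mathcal E_{n-1,n}$; (4) $\mathcal E_{i,j'}e_n=(rs)^2e_n\mathcal E_{i,j'}$ for $i<j<n$; (5) $\mathcal E_{i,n'}\mathcal E_{n-1,n}=\mathcal E_{n-1,n}\mathcal E_{i,n'}$ for $i<n-1$; (6) $\mathcal E_{i,n'}\mathcal E_{n-1,n'}=s^2\mathcal E_{n-1,n'}\mathcal E_{i,n'}$ for $i<n-1$; (7) $\mathcal E_{i,(n-1)'}\mathcal E_{n-1,n}=s^2\mathcal E_{n-1,n}\mathcal E_{i,(n-1)'}$ for $i<n-1$; (8) $\mathcal E_{i,(n-1)'}\mathcal E_{n-1,n'}=(rs^2)^2\mathcal E_{n-1,n'}\mathcal E_{i,(n-1)'}$ for $i<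n-1$.
   Context: Let $r,s\in\mathbb C^*$ with $r^3\ne s^3$, $r^4\ne s^4$, $\mathbb K=\mathbb Q(r,s)$. $U_{r,s}(\mathfrak{so}_{2n+1})$ is the $\mathbb K$-algebra generated by $e_i,f_i,\omega_i^{\pm1},\omega_i'^{\pm1}$ ($1\le i\le n$) with: $\omega$'s commute, invertible; $\omega_je_i\omega_j^{-1}=\langle\omega_i',\omega_j\rangle e_i$, $\omega_jf_i\omega_j^{-1}=\langle\omega_i',\omega_j\rangle^{-1}f_i$, $\omega_j'e_i\omega_j'^{-1}=\langle\omega_j',\omega_i\rangle^{-1}e_i$, $\omega_j'f_i\omega_j'^{-1}=\langle\omega_j',\omega_i\rangle f_i$, where $\langle\omega_i',\omega_i\rangle=r^2s^{-2}$ ($i<n$), $\langle\omega_n',\omega_n\rangle=rs^{-1}$, $\langle\omega_i',\omega_{i+1}\rangle=r^{-2}$, $\langle\omega_{i+1}',\omega_i\rangle=s^2$ ($i<n$), others $1$; $e_if_j-f_je_i=\delta_{ij}(\omega_i-\omega_i')/(r_i-s_i)$ ($r_i=r^2,s_i=s^2$ for $i<n$; $r_n=r,s_n=s$); Serre relations $(\mathrm{ad}_le_i)^{1-a_{ij}}(e_j)=0=(\mathrm{ad}_rf_i)^{1-a_{ij}}(f_j)$, $i\ne j$, with $(a_{ij})$ the $B_n$ Cartan matrix ($a_{ii}=2$, $a_{i,i+1}=a_{i+1,i}=-1$ for $i\le n-2$, $a_{n-1,n}=-1$, $a_{n,n-1}=-2$, else $0$), $\mathrm{ad}_l(a)(b)=\sum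 a_{(1)}bS(a_{(2)})$, $\mathrm{ad}_r(a)(b)=\sum S(a_{(1)})ba_{(2)}$, for the Hopf structure $\Delta(\omega)=\omega\otimes\omega$, $\Delta(e_i)=e_i\otimes1+\omega_i\otimes e_i$, $\Delta(f_i)=1\otimes f_i+f_i\otimes\omega_i'$, $S(e_i)=-\omega_i^{-1}e_i$, $S(f_i)=-f_i\omega_i'^{-1}$. Root vectors: $\mathcal E_{i,i}=e_i$, $\mathcal E_{i,j}=e_i\mathcal E_{i+1,j}-r^2\mathcal E_{i+1,j}e_i$ ($1\le i<j\le n$), $\mathcal E_{i,n'}=\mathcal E_{i,n}e_n-rs\,e_n\mathcal E_{i,n}$ ($i\le n-1$), $\mathcal E_{i,j'}=\mathcal E_{i,(j+1)'}e_j-s^{-2}e_j\mathcal E_{i,(j+1)'}$ ($1\le i<j\le n-1$). *)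

theory Defs
  imports Complex_Main
begin

(* Pairing <omega_i', omega_j> for the two-parameter quantum group of type B_n *)
definition pairB :: "nat \<Rightarrow> complex \<Rightarrow> complex \<Rightarrow> nat \<Rightarrow> nat \<Rightarrow> complex" where
  "pairB n r s i j =
     (if i = j then (if i < n then r^2 * inverse (s^2) else r * inverse s)
      else if j = i + 1 then inverse (r^2)
      else if i = j + 1 then s^2
      else 1)"

definition cartanB :: "nat \<Rightarrow> nat \<Rightarrow> nat \<Rightarrow> int" where
  "cartanB n i j =
     (if i = j then 2
      else if j = i + 1 \<and> i \<le> n - 2 then -1
      else if i = j + 1 \<and> j \<le> n - 2 then -1
      else if i = n - 1 \<and> j = n then -1
      else if i = n \<and> j = n - 1 then -2
      else 0)"

definition rB :: "nat \<Rightarrow> complex \<Rightarrow> nat \<Rightarrow> complex" where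
  "rB n r i = (if i < n then r^2 else r)"

definition adl :: "(nat \<Rightarrow> 'a::ring_1) \<Rightarrow> (nat \<Rightarrow> 'a) \<Rightarrow> (nat \<Rightarrow> 'a) \<Rightarrow> nat \<Rightarrow> 'a \<Rightarrow> 'a" where
  "adl e w winv i b = e i * b - w i * b * winv i * e i"

definition adr :: "(nat \<Rightarrow> 'a::ring_1) \<Rightarrow> (nat \<Rightarrow> 'a) \<Rightarrow> (nat \<Rightarrow> 'a) \<Rightarrow> nat \<Rightarrow> 'a \<Rightarrow> 'a" where
  "adr f wp wpinv i b = b * f i - f i * wpinv i * b * wp i"

(* c : scalar embedding K -> A, an algebra structure (ring hom into the centre) *)
definition scalar_emb :: "(complex \<Rightarrow> 'a::ring_1) \<Rightarrow> bool" where
  "scalar_emb c \<longleftrightarrow> (\<forall>x y. c (x + y) = c x + c y) \<and> (\<forall>x y. c (x * y) = c x * c y)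
      \<and> c 1 = 1 \<and> (\<forall>x a. c x * a = a * c x)"

definition Urs_rel ::
  "nat \<Rightarrow> complex \<Rightarrow> complex \<Rightarrow> (complex \<Rightarrow> 'a::ring_1) \<Rightarrow> (nat \<Rightarrow> 'a) \<Rightarrow> (nat \<Rightarrow> 'a)
   \<Rightarrow> (nat \<Rightarrow> 'a) \<Rightarrow> (nat \<Rightarrow> 'a) \<Rightarrow> (nat \<Rightarrow> 'a) \<Rightarrow> (nat \<Rightarrow> 'a) \<Rightarrow> bool" where
  "Urs_rel n r s c e f w wp winv wpinv \<longleftrightarrow>
    scalar_emb c \<and>
    (\<forall>i\<in>{1..n}. w i * winv i = 1 \<and> winv i * w i = 1 \<and> wp i * wpinv i = 1 \<and> wpinv i * wp i = 1) \<and>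
    (\<forall>i\<in>{1..n}. \<forall>j\<in>{1..n}. w i * w j = w j * w i \<and> w i * wp j = wp j * w i \<and> wp i * wp j = wp j * wp i) \<and>
    (\<forall>i\<in>{1..n}. \<forall>j\<in>{1..n}.
        w j * e i * winv j = c (pairB n r s i j) * e i \<and>
        w j * f i * winv j = c (inverse (pairB n r s i j)) * f i \<and>
        wp j * e i * wpinv j = c (inverse (pairB n r s j i)) * e i \<and>
        wp j * f i * wpinv j = c (pairB n r s j i) * f i) \<and>
    (\<forall>i\<in>{1..n}. \<forall>j\<in>{1..n}.
        e i * f j - f j * e i =
          (if i = j then c (inverse (rB n r i - rB n s i)) * (w i - wp i) else 0)) \<and>
    (\<forall>i\<in>{1..n}. \<forall>j\<in>{1..n}. i \<noteq> j \<longrightarrow>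
        ((adl e w winv i) ^^ nat (1 - cartanB n i j)) (e j) = 0 \<and>
        ((adr f wp wpinv i) ^^ nat (1 - cartanB n i j)) (f j) = 0)"

(* E_{i,i+k} *)
primrec Ek :: "(complex \<Rightarrow> 'a::ring_1) \<Rightarrow> complex \<Rightarrow> (nat \<Rightarrow> 'a) \<Rightarrow> nat \<Rightarrow> nat \<Rightarrow> 'a" where
  "Ek c r e i 0 = e i"
| "Ek c r e i (Suc k) = e i * Ek c r e (i + 1) k - c (r^2) * Ek c r e (i + 1) k * e i"

definition RE :: "(complex \<Rightarrow> 'a::ring_1) \<Rightarrow> complex \<Rightarrow> (nat \<Rightarrow> 'a) \<Rightarrow> nat \<Rightarrow> nat \<Rightarrow> 'a" where
  "RE c r e i j = Ek c r e i (j - i)"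

(* E_{i,(n-m)'} *)
primrec Epk :: "nat \<Rightarrow> (complex \<Rightarrow> 'a::ring_1) \<Rightarrow> complex \<Rightarrow> complex \<Rightarrow> (nat \<Rightarrow> 'a) \<Rightarrow> nat \<Rightarrow> nat \<Rightarrow> 'a" where
  "Epk n c r s e i 0 = RE c r e i n * e n - c (r * s) * e n * RE c r e i n"
| "Epk n c r s e i (Suc m) =
     Epk n c r s e i m * e (n - Suc m) - c (inverse (s^2)) * e (n - Suc m) * Epk n c r s e i m"

definition REp :: "nat \<Rightarrow> (complex \<Rightarrow> 'a::ring_1) \<Rightarrow> complex \<Rightarrow> complex \<Rightarrow> (nat \<Rightarrow> 'a) \<Rightarrow> nat \<Rightarrow> nat \<Rightarrow> 'a" where
  "REp n c r s e i j = Epk n c r s e i (n - j)"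

end

theory Submission
  imports Defs
begin


type_synonym ft = "int \<times> int \<times> int \<times> nat list"

fun wprod :: "(nat \<Rightarrow> 'a::ring_1) \<Rightarrow> nat list \<Rightarrow> 'a" where
  "wprod g [] = 1"
| "wprod g (i # w) = g i * wprod g w"

lemma wprod_append: "wprod g (u @ v) = wprod g u * wprod g v"
  by (induction u) (simp_all add: mult.assoc)

fun fmon :: "ft \<Rightarrow> ft \<Rightarrow> ft" where
  "fmon (k1,a1,b1,w1) (k2,a2,b2,w2) = (k1*k2, a1+a2, b1+b2, w1 @ w2)"

definition fmul :: "ft list \<Rightarrow> ft list \<Rightarrow> ft list" where
  "fmul P Q = concat (map (\<lambda>t. map (fmon t) Q) P)"

fun fneg1 :: "ft \<Rightarrow> ft" where "fneg1 (k,a,b,w) = (-k,a,b,w)"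
definition fneg :: "ft list \<Rightarrow> ft list" where "fneg P = map fneg1 P"

definition fsc :: "int \<times> int \<times> int \<Rightarrow> ft list \<Rightarrow> ft list" where
  "fsc m P = (case m of (k,a,b) \<Rightarrow> map (fmon (k,a,b,[])) P)"

definition fg :: "nat \<Rightarrow> ft list" where "fg i = [(1,0,0,[i])]"
definition fw :: "nat list \<Rightarrow> ft list" where "fw w = [(1,0,0,w)]"

definition fqc :: "ft list \<Rightarrow> ft list \<Rightarrow> int \<times> int \<times> int \<Rightarrow> ft list" where
  "fqc P Q m = fmul P Q @ fneg (fsc m (fmul Q P))"

fun wle :: "nat list \<Rightarrow> nat list \<Rightarrow> bool" where
  "wle [] ys = True"
| "wle (x#xs) [] = False"
| "wle (x#xs) (y#ys) = (x < y \<or> (x = y \<and> wle xs ys))"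

fun kle :: "ft \<Rightarrow> ft \<Rightarrow> bool" where
  "kle (k1,a1,b1,w1) (k2,a2,b2,w2) =
     (if w1 = w2 then (a1 < a2 \<or> (a1 = a2 \<and> b1 \<le> b2)) else wle w1 w2)"

fun merge :: "ft list \<Rightarrow> ft list \<Rightarrow> ft list" where
  "merge [] ys = ys"
| "merge xs [] = xs"
| "merge (x#xs) (y#ys) = (if kle x y then x # merge xs (y#ys) else y # merge (x#xs) ys)"

function msort :: "ft list \<Rightarrow> ft list" where
  "msort xs = (if length xs \<le> 1 then xs else
      merge (msort (take (length xs div 2) xs)) (msort (drop (length xs div 2) xs)))"
  by pat_completeness auto
termination
  by (relation "measure length") auto

declare msort.simps [simp del]

fun mg :: "ft list \<Rightarrow> ft list" where
  "mg [] = []"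
| "mg [(k,a,b,w)] = (if k = 0 then [] else [(k,a,b,w)])"
| "mg ((k,a,b,w) # (k',a',b',w') # xs) =
     (if a = a' \<and> b = b' \<and> w = w' then mg ((k+k',a,b,w) # xs)
      else if k = 0 then mg ((k',a',b',w') # xs)
      else (k,a,b,w) # mg ((k',a',b',w') # xs))"

fun expC :: "ft list list \<Rightarrow> (int \<times> int \<times> int \<times> nat list \<times> nat \<times> nat list) list \<Rightarrow> ft list" where
  "expC H [] = []"
| "expC H ((k,a,b,u,j,v) # cs) = fsc (k,a,b) (fmul (fmul (fw u) (H ! j)) (fw v)) @ expC H cs"

definition normchk :: "ft list \<Rightarrow> ft list \<Rightarrow> ft list list \<Rightarrow> (int \<times> int \<times> int \<times> nat list \<times> nat \<times> nat list) list \<Rightarrow> bool" where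
  "normchk D T H C = (mg (msort (fmul D T @ fneg (expC H C))) = [])"

definition fsA1 :: "ft list \<Rightarrow> ft list \<Rightarrow> ft list" where
  "fsA1 P Q = fmul P (fmul P Q) @ fsc (-1,2,0) (fmul P (fmul Q P)) @ fsc (-1,0,2) (fmul P (fmul Q P))
     @ fsc (1,2,2) (fmul Q (fmul P P))"
definition fsA2 :: "ft list \<Rightarrow> ft list \<Rightarrow> ft list" where
  "fsA2 P Q = fsc (1,2,2) (fmul Q (fmul Q P)) @ fsc (-1,2,0) (fmul Q (fmul P Q)) @ fsc (-1,0,2) (fmul Q (fmul P Q))
     @ fmul P (fmul Q Q)"
definition fsB2 :: "ft list \<Rightarrow> ft list \<Rightarrow> ft list" where
  "fsB2 P Q = fsc (1,3,3) (fmul Q (fmul Q (fmul Q P)))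
     @ fsc (-1,3,1) (fmul Q (fmul Q (fmul P Q))) @ fsc (-1,2,2) (fmul Q (fmul Q (fmul P Q))) @ fsc (-1,1,3) (fmul Q (fmul Q (fmul P Q)))
     @ fsc (1,2,0) (fmul Q (fmul P (fmul Q Q))) @ fsc (1,1,1) (fmul Q (fmul P (fmul Q Q))) @ fsc (1,0,2) (fmul Q (fmul P (fmul Q Q)))
     @ fneg (fmul P (fmul Q (fmul Q Q)))"

definition fdef :: "nat \<Rightarrow> ft list \<Rightarrow> ft list" where "fdef L P = fg L @ fneg P"

definition fconst :: "(int \<times> int \<times> int) list \<Rightarrow> ft list" where
  "fconst ds = map (\<lambda>(k,a,b). (k,a,b,[])) ds"

locale sc =
  fixes c :: "complex \<Rightarrow> 'a::ring_1" and r s :: complex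
  assumes emb: "scalar_emb c" and r0: "r \<noteq> 0" and s0: "s \<noteq> 0"
begin

lemma c_add: "c (x + y) = c x + c y" using emb unfolding scalar_emb_def by blast
lemma c_mult: "c (x * y) = c x * c y" using emb unfolding scalar_emb_def by blast
lemma c_one [simp]: "c 1 = 1" using emb unfolding scalar_emb_def by blast
lemma c_comm: "c x * a = a * c x" using emb unfolding scalar_emb_def by blast
lemma c_zero [simp]: "c 0 = 0"
proof -
  have "c (0 + 0) = c 0 + c 0" by (rule c_add)
  thus ?thesis by simp
qed
lemma c_uminus: "c (- x) = - c x"
proof -
  have "c (x + - x) = c x + c (- x)" by (rule c_add)
  thus ?thesis by (simp add: eq_neg_iff_add_eq_0 add.commute)
qed
lemma c_diff: "c (x - y) = c x - c y"
  using c_add[of x "-y"] by (simp add: c_uminus)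
lemma c_left_comm: "a * (c x * b) = c x * (a * b)"
  by (metis c_comm mult.assoc)

definition mv :: "int \<Rightarrow> int \<Rightarrow> int \<Rightarrow> complex" where
  "mv k a b = of_int k * r powi a * s powi b"

definition evt :: "(nat \<Rightarrow> 'a) \<Rightarrow> ft \<Rightarrow> 'a" where
  "evt g t = (case t of (k,a,b,w) \<Rightarrow> c (mv k a b) * wprod g w)"

definition ev :: "(nat \<Rightarrow> 'a) \<Rightarrow> ft list \<Rightarrow> 'a" where
  "ev g P = sum_list (map (evt g) P)"

lemma ev_Nil [simp]: "ev g [] = 0" by (simp add: ev_def)
lemma ev_Cons: "ev g (t # P) = evt g t + ev g P" by (simp add: ev_def)
lemma ev_append [simp]: "ev g (P @ Q) = ev g P + ev g Q" by (simp add: ev_def)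

lemma mv_mult: "mv k1 a1 b1 * mv k2 a2 b2 = mv (k1*k2) (a1+a2) (b1+b2)"
  using r0 s0 by (simp add: mv_def power_int_add algebra_simps)

lemma evt_fmon: "evt g (fmon t1 t2) = evt g t1 * evt g t2"
proof -
  obtain k1 a1 b1 w1 where t1: "t1 = (k1,a1,b1,w1)" by (cases t1) auto
  obtain k2 a2 b2 w2 where t2: "t2 = (k2,a2,b2,w2)" by (cases t2) auto
  have "wprod g w1 * (c (mv k2 a2 b2) * wprod g w2) = c (mv k2 a2 b2) * (wprod g w1 * wprod g w2)"
    by (rule c_left_comm)
  hence "c (mv k1 a1 b1) * wprod g w1 * (c (mv k2 a2 b2) * wprod g w2)
        = c (mv k1 a1 b1 * mv k2 a2 b2) * (wprod g w1 * wprod g w2)"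
    by (simp only: c_mult mult.assoc)
  thus ?thesis by (simp add: t1 t2 evt_def wprod_append mv_mult)
qed

lemma ev_map_fmon: "ev g (map (fmon t) Q) = evt g t * ev g Q"
  by (induction Q) (simp_all add: ev_Cons evt_fmon distrib_left)

lemma ev_fmul [simp]: "ev g (fmul P Q) = ev g P * ev g Q"
  by (induction P) (simp_all add: fmul_def ev_Cons ev_map_fmon distrib_right)

lemma ev_fneg [simp]: "ev g (fneg P) = - ev g P"
proof (induction P)
  case Nil thus ?case by (simp add: fneg_def)
next
  case (Cons t P)
  obtain k a b w where t: "t = (k,a,b,w)" by (cases t) auto
  have "evt g (fneg1 t) = - evt g t"
    by (simp add: t evt_def mv_def c_uminus)
  with Cons show ?case by (simp add: fneg_def ev_Cons)
qed

lemma evt_unit: "evt g (k,a,b,[]) = c (mv k a b)" by (simp add: evt_def)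

lemma ev_fsc [simp]: "ev g (fsc (k,a,b) P) = c (mv k a b) * ev g P"
  unfolding fsc_def using ev_map_fmon[of g "(k,a,b,[])" P] by (simp add: evt_unit)

lemma ev_fg [simp]: "ev g (fg i) = g i" by (simp add: fg_def ev_def evt_def mv_def)
lemma ev_fw [simp]: "ev g (fw w) = wprod g w" by (simp add: fw_def ev_def evt_def mv_def)

lemma ev_fqc: "ev g (fqc P Q (k,a,b)) = ev g P * ev g Q - c (mv k a b) * (ev g Q * ev g P)"
  by (simp add: fqc_def)

lemma ev_merge: "ev g (merge xs ys) = ev g xs + ev g ys"
  by (induction xs ys rule: merge.induct) (simp_all add: ev_Cons algebra_simps)

lemma ev_msort: "ev g (msort xs) = ev g xs"
proof (induction xs rule: msort.induct)
  case (1 xs)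
  show ?case
  proof (cases "length xs \<le> 1")
    case True thus ?thesis by (subst msort.simps) simp
  next
    case False
    hence "ev g (msort xs) = ev g (msort (take (length xs div 2) xs)) + ev g (msort (drop (length xs div 2) xs))"
      by (subst msort.simps) (simp add: ev_merge)
    also have "\<dots> = ev g (take (length xs div 2) xs) + ev g (drop (length xs div 2) xs)"
      using 1 False by simp
    also have "\<dots> = ev g xs" by (metis ev_append append_take_drop_id)
    finally show ?thesis .
  qed
qed

lemma mv_add: "mv (k + k') a b = mv k a b + mv k' a b"
  by (simp add: mv_def distrib_right)

lemma evt_add: "evt g (k,a,b,w) + evt g (k',a,b,w) = evt g (k+k',a,b,w)"
  unfolding evt_def by (simp only: prod.case mv_add c_add distrib_right)

lemma evt_zero: "evt g (0,a,b,w) = 0" by (simp add: evt_def mv_def)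

lemma ev_mg: "ev g (mg xs) = ev g xs"
proof (induction xs rule: mg.induct)
  case 1 thus ?case by simp
next
  case (2 k a b w) thus ?case by (simp add: ev_Cons evt_zero)
next
  case (3 k a b w k' a' b' w' xs)
  show ?case
  proof (cases "a = a' \<and> b = b' \<and> w = w'")
    case True
    hence e: "mg ((k,a,b,w) # (k',a',b',w') # xs) = mg ((k+k',a,b,w) # xs)" by simp
    have "ev g (mg ((k+k',a,b,w) # xs)) = ev g ((k+k',a,b,w) # xs)" using 3(1) True by blast
    hence "ev g (mg ((k,a,b,w) # (k',a',b',w') # xs)) = ev g ((k+k',a,b,w) # xs)"
      by (simp only: e)
    also have "\<dots> = evt g (k,a,b,w) + evt g (k',a,b,w) + ev g xs"
      by (simp only: ev_Cons evt_add)
    finally show ?thesis using True by (simp add: ev_Cons add.assoc)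
  next
    case F: False
    show ?thesis
    proof (cases "k = 0")
      case True
      hence e: "mg ((k,a,b,w) # (k',a',b',w') # xs) = mg ((k',a',b',w') # xs)"
        using F by auto
      have "ev g (mg ((k',a',b',w') # xs)) = ev g ((k',a',b',w') # xs)"
        using 3(2) F True by blast
      hence "ev g (mg ((k,a,b,w) # (k',a',b',w') # xs)) = ev g ((k',a',b',w') # xs)"
        by (simp only: e)
      thus ?thesis using True by (simp add: ev_Cons evt_zero)
    next
      case False
      hence e: "mg ((k,a,b,w) # (k',a',b',w') # xs) = (k,a,b,w) # mg ((k',a',b',w') # xs)"
        using F by auto
      have "ev g (mg ((k',a',b',w') # xs)) = ev g ((k',a',b',w') # xs)"
        using 3(3) F False by blast
      thus ?thesis by (simp only: e ev_Cons)
    qed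
  qed
qed

lemma ev_expC:
  assumes "\<forall>h\<in>set H. ev g h = 0" "\<forall>(k,a,b,u,j,v)\<in>set C. j < length H"
  shows "ev g (expC H C) = 0"
  using assms(2)
proof (induction C)
  case Nil thus ?case by simp
next
  case (Cons x cs)
  obtain k a b u j v where x: "x = (k,a,b,u,j,v)" by (cases x) auto
  have j: "j < length H" using Cons(2) x by auto
  hence h: "ev g (H ! j) = 0" using assms(1) nth_mem by blast
  have ih: "ev g (expC H cs) = 0" using Cons by auto
  have "ev g (expC H (x # cs)) = c (mv k a b) * (wprod g u * ev g (H ! j) * wprod g v) + ev g (expC H cs)"
    by (simp only: x expC.simps ev_append ev_fsc ev_fmul ev_fw)
  thus ?case by (simp only: h ih mult_zero_right mult_zero_left add_0)
qed

lemma check: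
  assumes "normchk D T H C" "\<forall>h\<in>set H. ev g h = 0" "\<forall>(k,a,b,u,j,v)\<in>set C. j < length H"
    and "ev g D = c d" and "d \<noteq> 0"
  shows "ev g T = 0"
proof -
  have "ev g (mg (msort (fmul D T @ fneg (expC H C)))) = 0" using assms(1) by (simp add: normchk_def)
  hence "c d * ev g T = 0" using ev_expC[OF assms(2,3)] assms(4) by (simp add: ev_mg ev_msort)
  hence "c (inverse d) * (c d * ev g T) = 0" by (simp only: mult_zero_right)
  moreover have "c (inverse d) * (c d * ev g T) = c (inverse d * d) * ev g T"
    by (simp only: mult.assoc[symmetric] c_mult)
  moreover have "inverse d * d = 1" using assms(5) by simp
  ultimately show ?thesis by simp
qed

definition qcm :: "'a \<Rightarrow> 'a \<Rightarrow> complex \<Rightarrow> 'a" where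
  "qcm x y q = x * y - c q * (y * x)"

lemma ev_fqc': "ev g (fqc P Q (k,a,b)) = qcm (ev g P) (ev g Q) (mv k a b)"
  by (simp add: qcm_def ev_fqc)

lemma ev_fdef: "ev g (fdef L P) = g L - ev g P"
  by (simp add: fdef_def)

definition dval :: "(int \<times> int \<times> int) list \<Rightarrow> complex" where
  "dval ds = sum_list (map (\<lambda>(k,a,b). mv k a b) ds)"

lemma ev_fconst: "ev g (fconst ds) = c (dval ds)"
proof (induction ds)
  case Nil thus ?case by (simp add: fconst_def dval_def)
next
  case (Cons x ds)
  obtain k a b where x: "x = (k,a,b)" by (cases x) auto
  have "ev g (fconst (x # ds)) = c (mv k a b) + ev g (fconst ds)"
    by (simp add: x fconst_def ev_Cons evt_def)
  thus ?case using Cons by (simp add: x dval_def c_add)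
qed

lemma check2:
  assumes "normchk (fconst ds) T H C" "\<forall>h\<in>set H. ev g h = 0" "\<forall>(k,a,b,u,j,v)\<in>set C. j < length H"
    and "dval ds \<noteq> 0"
  shows "ev g T = 0"
  by (rule check[OF assms(1,2,3) ev_fconst assms(4)])

lemma ring_id:
  assumes "normchk [(1,0,0,[])] (P @ fneg Q) [] []"
  shows "ev g P = ev g Q"
proof -
  have "dval [(1,0,0)] \<noteq> 0" by (simp add: dval_def mv_def)
  moreover have "fconst [(1,0,0)] = [(1,0,0,[])]" by (simp add: fconst_def)
  ultimately have "ev g (P @ fneg Q) = 0" using check2[of "[(1,0,0)]" "P @ fneg Q" "[]" "[]" g] assms by simp
  thus ?thesis by simp
qed

lemma mv_simps: "mv 1 0 0 = 1" "mv 1 2 0 = r^2" "mv 1 1 1 = r * s" "mv 1 0 (-2) = inverse (s^2)"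
  "mv 1 0 2 = s^2" "mv 1 2 2 = (r*s)^2" "mv 1 2 4 = (r*s^2)^2" "mv 1 (-2) 0 = inverse (r^2)"
  "mv 1 2 (-2) = r^2 * inverse (s^2)" "mv 1 1 (-1) = r * inverse s"
  by (simp_all add: mv_def power_int_minus power_mult_distrib)

lemma c_lc: "NO_MATCH (c z) a \<Longrightarrow> a * (c x * b) = c x * (a * b)" by (rule c_left_comm)
lemma c_rc: "NO_MATCH (c z) a \<Longrightarrow> a * c x = c x * a" by (rule c_comm[symmetric])
lemma c_cc: "c x * (c y * b) = c (x * y) * b" by (simp add: c_mult mult.assoc)
lemma c_cc2: "c x * c y = c (x * y)" by (simp add: c_mult)
lemmas cs = c_lc c_rc c_cc c_cc2

lemma qcm_1: "qcm x y 1 = x * y - y * x" by (simp add: qcm_def)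
lemma qcm_0r: "qcm x 0 q = 0" by (simp add: qcm_def)
lemma qcm_0l: "qcm 0 y q = 0" by (simp add: qcm_def)

lemma G1: assumes "a*y = y*a" "x*y = y*x" shows "qcm a x q * y = y * qcm a x q"
proof -
  have h1: "a * (y * z) = y * (a * z)" for z by (metis assms(1) mult.assoc)
  have h2: "x * (y * z) = y * (x * z)" for z by (metis assms(2) mult.assoc)
  show ?thesis unfolding qcm_def by (simp add: algebra_simps cs assms h1 h2)
qed

lemma G2: assumes "a*y = y*a" shows "qcm (qcm a x p) y l = qcm a (qcm x y l) p"
proof -
  have h: "a * (y * z) = y * (a * z)" for z by (metis assms mult.assoc)
  show ?thesis unfolding qcm_def by (simp add: algebra_simps cs assms h)
qed

lemma G2': assumes "a*y = y*a" shows "qcm y (qcm a x p) l = qcm a (qcm y x l) p"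
proof -
  have h: "a * (y * z) = y * (a * z)" for z by (metis assms mult.assoc)
  show ?thesis unfolding qcm_def by (simp add: algebra_simps cs assms h)
qed

lemma G3: assumes "a*y = y*a" shows "qcm (qcm x a p) y l = qcm (qcm x y l) a p"
proof -
  have h: "a * (y * z) = y * (a * z)" for z by (metis assms mult.assoc)
  show ?thesis unfolding qcm_def by (simp add: algebra_simps cs assms h)
qed

lemma G5: assumes "b*p = p*b" shows "qcm b (qcm p u sg) rh = qcm p (qcm b u rh) sg"
proof -
  have h: "b * (p * z) = p * (b * z)" for z by (metis assms mult.assoc)
  show ?thesis unfolding qcm_def by (simp add: algebra_simps cs assms h)
qed

end

locale sc2 = sc +
  assumes r3: "r^3 \<noteq> s^3" and r4: "r^4 \<noteq> s^4"
begin

lemma q1: "r^2 + s^2 \<noteq> 0"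
proof
  assume a: "r^2 + s^2 = 0"
  have "r^4 - s^4 = (r^2 + s^2) * (r^2 - s^2)" by algebra
  hence "r^4 - s^4 = 0" using a by simp
  thus False using r4 by simp
qed

lemma q2: "r^2 + r*s + s^2 \<noteq> 0"
proof
  assume a: "r^2 + r*s + s^2 = 0"
  have "r^3 - s^3 = (r - s) * (r^2 + r*s + s^2)" by algebra
  hence "r^3 - s^3 = 0" using a by simp
  thus False using r3 by simp
qed

end



lemma (in sc2) dnz0: "dval [(1,1,0)] \<noteq> 0"
proof -
  have "dval [(1,1,0)] = r"
    unfolding dval_def mv_def by (simp; algebra?)
  thus ?thesis using r0 s0 q1 q2 by simp
qed

lemma (in sc2) dnz1: "dval [(1,0,0)] \<noteq> 0"
proof -
  have "dval [(1,0,0)] = 1"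
    unfolding dval_def mv_def by (simp; algebra?)
  thus ?thesis using r0 s0 q1 q2 by simp
qed

lemma (in sc2) dnz2: "dval [(1,2,2), (1,4,0)] \<noteq> 0"
proof -
  have "dval [(1,2,2), (1,4,0)] = r * r * (r^2 + s^2)"
    unfolding dval_def mv_def by (simp; algebra?)
  thus ?thesis using r0 s0 q1 q2 by simp
qed

lemma (in sc2) dnz3: "dval [(1,0,2), (1,1,1), (1,2,0)] \<noteq> 0"
proof -
  have "dval [(1,0,2), (1,1,1), (1,2,0)] = (r^2 + r*s + s^2)"
    unfolding dval_def mv_def by (simp; algebra?)
  thus ?thesis using r0 s0 q1 q2 by simp
qed

lemma (in sc2) dnz4: "dval [(1,2,0)] \<noteq> 0"
proof -
  have "dval [(1,2,0)] = r * r"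
    unfolding dval_def mv_def by (simp; algebra?)
  thus ?thesis using r0 s0 q1 q2 by simp
qed

lemma (in sc2) dnz5: "dval [(1,0,2), (1,2,0)] \<noteq> 0"
proof -
  have "dval [(1,0,2), (1,2,0)] = (r^2 + s^2)"
    unfolding dval_def mv_def by (simp; algebra?)
  thus ?thesis using r0 s0 q1 q2 by simp
qed

lemma (in sc2) B2_lem:
  fixes x1 x2 :: "'a"
  assumes "qcm x1 (qcm x1 x2 (r^2)) (s^2) = 0"
    and "qcm (qcm (qcm x1 x2 (r^2)) x2 (r*s)) x2 (s^2) = 0"
  shows "qcm (qcm x1 x2 (r^2)) (qcm (qcm x1 x2 (r^2)) x2 (r*s)) (s^2) = 0"
proof -
  define y3 where "y3 = qcm x1 x2 (r^2)"
  define y4 where "y4 = qcm y3 x2 (r*s)"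
  define g where "g = (!) [0, x1, x2, y3, y4]"
  have gs: "g 1 = x1" "g 2 = x2" "g 3 = y3" "g 4 = y4" "g (Suc 0) = x1" by (simp_all add: g_def)
  have h0: "ev g (fdef 3 (fqc (fg 1) (fg 2) (1,2,0))) = 0" by (simp add: ev_fdef ev_fqc' ev_fg gs mv_simps y3_def y4_def)
  have h1: "ev g (fdef 4 (fqc (fg 3) (fg 2) (1,1,1))) = 0" by (simp add: ev_fdef ev_fqc' ev_fg gs mv_simps y3_def y4_def)
  have h2: "ev g (fqc (fg 1) (fg 3) (1,0,2)) = 0" using assms(1) by (simp add: ev_fqc' ev_fg gs mv_simps y3_def y4_def)
  have h3: "ev g (fqc (fg 4) (fg 2) (1,0,2)) = 0" using assms(2) by (simp add: ev_fqc' ev_fg gs mv_simps y3_def y4_def)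
  have h4: "ev g (fqc (fg 3) (fg 4) (1,0,2)) = 0"
    apply (rule check2[where ds="[(1,1,0)]" and H="[fdef 3 (fqc (fg 1) (fg 2) (1,2,0)), fdef 4 (fqc (fg 3) (fg 2) (1,1,1)), fqc (fg 1) (fg 3) (1,0,2), fqc (fg 4) (fg 2) (1,0,2)]"
       and C="[((-1),0,1,[3],0,[2]), ((-1),2,1,[],1,[1,2]), (1,0,(-1),[],2,[2,2]), ((-1),2,1,[2],2,[2]), ((-1),3,0,[2],2,[2]), (1,0,1,[],0,[3,2]), (1,1,0,[],0,[3,2]), (1,0,(-1),[1],1,[2]), ((-1),2,1,[4],0,[]), (1,4,1,[],3,[1]), (1,1,0,[3],1,[]), ((-1),1,2,[],1,[3]), (1,2,1,[],1,[3]), (1,2,3,[2,3],0,[]), (1,4,3,[2],1,[1]), (1,5,2,[2,2],2,[]), ((-1),3,2,[2],0,[3]), ((-1),1,2,[],0,[2,3]), ((-1),0,1,[1,2],1,[]), ((-1),0,(-1),[1],3,[])]"])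
       apply code_simp
      using h0 h1 h2 h3 apply auto[1]
     apply code_simp
    by (rule dnz0)
  show "qcm (qcm x1 x2 (r^2)) (qcm (qcm x1 x2 (r^2)) x2 (r*s)) (s^2) = 0" using h4 by (simp add: ev_fqc' ev_fg ev_fneg gs mv_simps y3_def y4_def)
qed

lemma (in sc2) B3_lem:
  fixes x1 x2 x3 :: "'a"
  assumes "qcm x1 x3 (1) = 0"
    and "qcm x1 (qcm x1 x2 (r^2)) (s^2) = 0"
    and "qcm (qcm x1 x2 (r^2)) x2 (s^2) = 0"
    and "qcm x2 (qcm x2 x3 (r^2)) (s^2) = 0"
    and "qcm (qcm (qcm x2 x3 (r^2)) x3 (r*s)) x3 (s^2) = 0"
  shows "qcm (qcm x1 (qcm x2 x3 (r^2)) (r^2)) (qcm x2 x3 (r^2)) (r*s) = qcm x2 (qcm (qcm x1 (qcm x2 x3 (r^2)) (r^2)) x3 (r*s)) (r^2)"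
    and "qcm (qcm (qcm (qcm x1 (qcm x2 x3 (r^2)) (r^2)) x3 (r*s)) x2 (inverse (s^2))) x3 ((r*s)^2) = 0"
    and "qcm (qcm (qcm x1 (qcm x2 x3 (r^2)) (r^2)) x3 (r*s)) (qcm x2 x3 (r^2)) (1) = 0"
    and "qcm (qcm (qcm x1 (qcm x2 x3 (r^2)) (r^2)) x3 (r*s)) (qcm (qcm x2 x3 (r^2)) x3 (r*s)) (s^2) = 0"
    and "qcm (qcm (qcm (qcm x1 (qcm x2 x3 (r^2)) (r^2)) x3 (r*s)) x2 (inverse (s^2))) (qcm x2 x3 (r^2)) (s^2) = 0"
    and "qcm (qcm (qcm (qcm x1 (qcm x2 x3 (r^2)) (r^2)) x3 (r*s)) x2 (inverse (s^2))) (qcm (qcm x2 x3 (r^2)) x3 (r*s)) ((r*s^2)^2) = 0"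
proof -
  define y4 where "y4 = qcm x2 x3 (r^2)"
  define y5 where "y5 = qcm x1 y4 (r^2)"
  define y6 where "y6 = qcm y5 x3 (r*s)"
  define y7 where "y7 = qcm y6 x2 (inverse (s^2))"
  define y8 where "y8 = qcm y4 x3 (r*s)"
  define y9 where "y9 = qcm x1 x2 (r^2)"
  define g where "g = (!) [0, x1, x2, x3, y4, y5, y6, y7, y8, y9]"
  have gs: "g 1 = x1" "g 2 = x2" "g 3 = x3" "g 4 = y4" "g 5 = y5" "g 6 = y6" "g 7 = y7" "g 8 = y8" "g 9 = y9" "g (Suc 0) = x1" by (simp_all add: g_def)
  have h0: "ev g (fdef 4 (fqc (fg 2) (fg 3) (1,2,0))) = 0" by (simp add: ev_fdef ev_fqc' ev_fg gs mv_simps y4_def y5_def y6_def y7_def y8_def y9_def)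
  have h1: "ev g (fdef 5 (fqc (fg 1) (fg 4) (1,2,0))) = 0" by (simp add: ev_fdef ev_fqc' ev_fg gs mv_simps y4_def y5_def y6_def y7_def y8_def y9_def)
  have h2: "ev g (fdef 6 (fqc (fg 5) (fg 3) (1,1,1))) = 0" by (simp add: ev_fdef ev_fqc' ev_fg gs mv_simps y4_def y5_def y6_def y7_def y8_def y9_def)
  have h3: "ev g (fdef 7 (fqc (fg 6) (fg 2) (1,0,(-2)))) = 0" by (simp add: ev_fdef ev_fqc' ev_fg gs mv_simps y4_def y5_def y6_def y7_def y8_def y9_def)
  have h4: "ev g (fdef 8 (fqc (fg 4) (fg 3) (1,1,1))) = 0" by (simp add: ev_fdef ev_fqc' ev_fg gs mv_simps y4_def y5_def y6_def y7_def y8_def y9_def)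
  have h5: "ev g (fdef 9 (fqc (fg 1) (fg 2) (1,2,0))) = 0" by (simp add: ev_fdef ev_fqc' ev_fg gs mv_simps y4_def y5_def y6_def y7_def y8_def y9_def)
  have h6: "ev g (fqc (fg 1) (fg 3) (1,0,0)) = 0" using assms(1) by (simp add: ev_fqc' ev_fg gs mv_simps y4_def y5_def y6_def y7_def y8_def y9_def)
  have h7: "ev g (fqc (fg 1) (fg 9) (1,0,2)) = 0" using assms(2) by (simp add: ev_fqc' ev_fg gs mv_simps y4_def y5_def y6_def y7_def y8_def y9_def)
  have h8: "ev g (fqc (fg 9) (fg 2) (1,0,2)) = 0" using assms(3) by (simp add: ev_fqc' ev_fg gs mv_simps y4_def y5_def y6_def y7_def y8_def y9_def)
  have h9: "ev g (fqc (fg 2) (fg 4) (1,0,2)) = 0" using assms(4) by (simp add: ev_fqc' ev_fg gs mv_simps y4_def y5_def y6_def y7_def y8_def y9_def)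
  have h10: "ev g (fqc (fg 8) (fg 3) (1,0,2)) = 0" using assms(5) by (simp add: ev_fqc' ev_fg gs mv_simps y4_def y5_def y6_def y7_def y8_def y9_def)
  have h18: "ev g (fqc (fg 3) (fg 6) (1,0,(-2))) = 0"
    apply (rule check2[where ds="[(1,0,0)]" and H="[fdef 5 (fqc (fg 1) (fg 4) (1,2,0)), fdef 6 (fqc (fg 5) (fg 3) (1,1,1)), fdef 8 (fqc (fg 4) (fg 3) (1,1,1)), fqc (fg 1) (fg 3) (1,0,0), fqc (fg 8) (fg 3) (1,0,2)]"
       and C="[(1,2,(-2),[4],3,[3]), ((-1),2,(-2),[],2,[1,3]), ((-1),0,(-2),[],0,[3,3]), (1,0,0,[3],0,[3]), (1,1,(-1),[3],0,[3]), ((-1),0,0,[],3,[4,3]), ((-1),1,(-1),[],3,[4,3]), (1,0,(-2),[1],2,[3]), (1,2,(-2),[8],3,[]), (1,2,(-2),[],4,[1]), ((-1),0,(-2),[],1,[3]), ((-1),2,0,[3,4],3,[]), (1,2,0,[3],2,[1]), ((-1),1,1,[3,3],0,[]), (1,1,1,[3],3,[4]), (1,1,1,[],3,[3,4]), ((-1),0,0,[1,3],2,[]), (1,0,0,[3],1,[]), ((-1),0,(-2),[1],4,[])]"])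
       apply code_simp
      using h1 h2 h4 h6 h10 apply auto[1]
     apply code_simp
    by (rule dnz1)
  have h19: "ev g (fqc (fg 4) (fg 8) (1,0,2)) = 0"
    apply (rule check2[where ds="[(1,1,0)]" and H="[fdef 4 (fqc (fg 2) (fg 3) (1,2,0)), fdef 8 (fqc (fg 4) (fg 3) (1,1,1)), fqc (fg 2) (fg 4) (1,0,2), fqc (fg 8) (fg 3) (1,0,2)]"
       and C="[((-1),0,1,[4],0,[3]), ((-1),2,1,[],1,[2,3]), (1,0,(-1),[],2,[3,3]), ((-1),2,1,[3],2,[3]), ((-1),3,0,[3],2,[3]), (1,0,1,[],0,[4,3]), (1,1,0,[],0,[4,3]), (1,0,(-1),[2],1,[3]), ((-1),2,1,[8],0,[]), (1,4,1,[],3,[2]), (1,1,0,[4],1,[]), ((-1),1,2,[],1,[4]), (1,2,1,[],1,[4]), (1,2,3,[3,4],0,[]), (1,4,3,[3],1,[2]), (1,5,2,[3,3],2,[]), ((-1),3,2,[3],0,[4]), ((-1),1,2,[],0,[3,4]), ((-1),0,1,[2,3],1,[]), ((-1),0,(-1),[2],3,[])]"])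
       apply code_simp
      using h0 h4 h9 h10 apply auto[1]
     apply code_simp
    by (rule dnz0)
  have h21: "ev g (fqc (fg 2) (fg 5) (1,0,0)) = 0"
    apply (rule check2[where ds="[(1,2,2), (1,4,0)]" and H="[fdef 4 (fqc (fg 2) (fg 3) (1,2,0)), fdef 5 (fqc (fg 1) (fg 4) (1,2,0)), fdef 9 (fqc (fg 1) (fg 2) (1,2,0)), fqc (fg 1) (fg 3) (1,0,0), fqc (fg 9) (fg 2) (1,0,2), fqc (fg 2) (fg 4) (1,0,2)]"
       and C="[((-1),6,0,[3],2,[2]), (1,6,0,[],0,[1,2]), (1,6,0,[],3,[2,2]), ((-1),4,2,[2],3,[2]), ((-1),6,0,[2],3,[2]), (1,2,2,[],2,[3,2]), (1,4,0,[],2,[3,2]), ((-1),4,0,[1],0,[2]), ((-1),0,2,[9],0,[]), ((-1),2,0,[9],0,[]), ((-1),2,0,[],4,[3]), ((-1),2,2,[],1,[2]), ((-1),4,0,[],1,[2]), (1,6,0,[3],4,[]), (1,4,2,[],0,[9]), (1,4,2,[2,3],2,[]), ((-1),4,2,[2],0,[1]), (1,4,2,[2,2],3,[]), ((-1),2,2,[2],2,[3]), ((-1),0,2,[],2,[2,3]), (1,0,2,[1,2],0,[]), (1,2,2,[2],1,[]), (1,4,0,[2],1,[]), (1,0,2,[],2,[4]), (1,2,0,[],2,[4]), ((-1),4,2,[4],2,[]), ((-1),6,0,[],5,[1]), (1,2,0,[1],5,[])]"])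
       apply code_simp
      using h0 h1 h5 h6 h8 h9 apply auto[1]
     apply code_simp
    by (rule dnz2)
  have h22: "ev g (fqc (fg 5) (fg 4) (1,1,1) @ fneg (fqc (fg 2) (fg 6) (1,2,0))) = 0"
    apply (rule check2[where ds="[(1,0,0)]" and H="[fdef 4 (fqc (fg 2) (fg 3) (1,2,0)), fdef 6 (fqc (fg 5) (fg 3) (1,1,1)), fqc (fg 2) (fg 5) (1,0,0)]"
       and C="[(1,0,0,[5],0,[]), (1,2,0,[],1,[2]), ((-1),0,0,[],2,[3]), (1,3,1,[3],2,[]), ((-1),1,1,[],0,[5]), ((-1),0,0,[2],1,[])]"])
       apply code_simp
      using h0 h2 h21 apply auto[1]
     apply code_simp
    by (rule dnz1)
  have h24: "ev g (fqc (fg 4) (fg 6) (1,0,0)) = 0"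
    apply (rule check2[where ds="[(1,0,2), (1,1,1), (1,2,0)]" and H="[fdef 4 (fqc (fg 2) (fg 3) (1,2,0)), fdef 5 (fqc (fg 1) (fg 4) (1,2,0)), fdef 6 (fqc (fg 5) (fg 3) (1,1,1)), fdef 8 (fqc (fg 4) (fg 3) (1,1,1)), fqc (fg 1) (fg 3) (1,0,0), fqc (fg 3) (fg 6) (1,0,(-2)), fqc (fg 4) (fg 8) (1,0,2), fqc (fg 5) (fg 4) (1,1,1) @ fneg (fqc (fg 2) (fg 6) (1,2,0))]"
       and C="[((-1),4,0,[4,4],4,[]), (1,4,0,[4],3,[1]), (1,2,0,[4],1,[3]), (1,5,1,[],3,[4,1]), (1,0,0,[],1,[4,3]), ((-1),4,2,[3,4],1,[]), (1,1,3,[3],1,[4]), ((-1),1,3,[],4,[4,4]), ((-1),0,0,[1,4],3,[]), (1,0,2,[1],3,[4]), ((-1),4,0,[],6,[1]), ((-1),0,0,[],7,[3]), (1,2,2,[4],4,[4]), (1,3,1,[4],4,[4]), ((-1),2,2,[],3,[1,4]), ((-1),3,1,[],3,[1,4]), ((-1),0,2,[],1,[3,4]), ((-1),1,1,[],1,[3,4]), ((-1),2,2,[8],1,[]), ((-1),3,1,[8],1,[]), ((-1),0,2,[],2,[4]), ((-1),1,1,[],2,[4]), (1,1,1,[4],2,[]), (1,2,0,[4],2,[]), (1,2,2,[],3,[5]), (1,3,1,[],3,[5]), (1,2,2,[3],7,[]), (1,0,2,[],0,[6]), (1,0,2,[2],5,[]), (1,0,0,[1],6,[]), ((-1),2,0,[6],0,[]),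 ((-1),4,2,[],5,[2])]"])
       apply code_simp
      using h0 h1 h2 h4 h6 h18 h19 h22 apply auto[1]
     apply code_simp
    by (rule dnz3)
  have h25: "ev g (fqc (fg 6) (fg 4) (1,0,0)) = 0"
    apply (rule check2[where ds="[(1,0,0)]" and H="[fqc (fg 4) (fg 6) (1,0,0)]"
       and C="[((-1),0,0,[],0,[])]"])
       apply code_simp
      using h24 apply auto[1]
     apply code_simp
    by (rule dnz1)
  have h26: "ev g (fqc (fg 4) (fg 7) (1,0,(-2))) = 0"
    apply (rule check2[where ds="[(1,0,0)]" and H="[fdef 7 (fqc (fg 6) (fg 2) (1,0,(-2))), fqc (fg 2) (fg 4) (1,0,2), fqc (fg 4) (fg 6) (1,0,0)]"
       and C="[((-1),0,(-2),[6],1,[]), (1,0,0,[],2,[2]), ((-1),0,(-2),[],0,[4]), (1,0,0,[4],0,[]), (1,0,(-4),[],1,[6]), ((-1),0,(-4),[2],2,[])]"])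
       apply code_simp
      using h3 h9 h24 apply auto[1]
     apply code_simp
    by (rule dnz1)
  have h27: "ev g (fqc (fg 7) (fg 4) (1,0,2)) = 0"
    apply (rule check2[where ds="[(1,0,0)]" and H="[fqc (fg 4) (fg 7) (1,0,(-2))]"
       and C="[((-1),0,2,[],0,[])]"])
       apply code_simp
      using h26 apply auto[1]
     apply code_simp
    by (rule dnz1)
  have h30: "ev g (fqc (fg 6) (fg 8) (1,0,2)) = 0"
    apply (rule check2[where ds="[(1,0,0)]" and H="[fdef 8 (fqc (fg 4) (fg 3) (1,1,1)), fqc (fg 3) (fg 6) (1,0,(-2)), fqc (fg 4) (fg 6) (1,0,0)]"
       and C="[(1,0,0,[6],0,[]), ((-1),0,0,[],2,[3]), (1,1,3,[],1,[4]), ((-1),0,2,[4],1,[]), ((-1),0,2,[],0,[6]), (1,1,3,[3],2,[])]"])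
       apply code_simp
      using h4 h18 h24 apply auto[1]
     apply code_simp
    by (rule dnz1)
  have h31: "ev g (fqc (fg 6) (fg 8) (1,0,2)) = 0"
    apply (rule check2[where ds="[(1,0,0)]" and H="[fqc (fg 6) (fg 8) (1,0,2)]"
       and C="[(1,0,0,[],0,[])]"])
       apply code_simp
      using h30 apply auto[1]
     apply code_simp
    by (rule dnz1)
  have h32: "ev g (fqc (fg 3) (fg 7) (1,(-2),(-2))) = 0"
    apply (rule check2[where ds="[(1,2,0)]" and H="[fdef 4 (fqc (fg 2) (fg 3) (1,2,0)), fdef 7 (fqc (fg 6) (fg 2) (1,0,(-2))), fqc (fg 3) (fg 6) (1,0,(-2)), fqc (fg 4) (fg 6) (1,0,0)]"
       and C="[(1,0,(-2),[6],0,[]), (1,2,0,[],2,[2]), ((-1),0,(-2),[],1,[3]), (1,2,0,[3],1,[]), ((-1),0,(-2),[],0,[6]), ((-1),0,(-2),[2],2,[]), (1,0,(-2),[],3,[])]"])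
       apply code_simp
      using h0 h3 h18 h24 apply auto[1]
     apply code_simp
    by (rule dnz4)
  have h33: "ev g (fqc (fg 7) (fg 3) (1,2,2)) = 0"
    apply (rule check2[where ds="[(1,0,0)]" and H="[fqc (fg 3) (fg 7) (1,(-2),(-2))]"
       and C="[((-1),2,2,[],0,[])]"])
       apply code_simp
      using h32 apply auto[1]
     apply code_simp
    by (rule dnz1)
  have h34: "ev g (fqc (fg 7) (fg 8) (1,2,4)) = 0"
    apply (rule check2[where ds="[(1,0,0)]" and H="[fdef 8 (fqc (fg 4) (fg 3) (1,1,1)), fqc (fg 4) (fg 7) (1,0,(-2)), fqc (fg 3) (fg 7) (1,(-2),(-2))]"
       and C="[(1,0,0,[7],0,[]), ((-1),0,2,[],1,[3]), (1,3,3,[],2,[4]), ((-1),2,4,[4],2,[]), ((-1),2,4,[],0,[7]), (1,3,5,[3],1,[])]"])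
       apply code_simp
      using h4 h26 h32 apply auto[1]
     apply code_simp
    by (rule dnz1)
  have h35: "ev g (fqc (fg 7) (fg 8) (1,2,4)) = 0"
    apply (rule check2[where ds="[(1,0,0)]" and H="[fqc (fg 7) (fg 8) (1,2,4)]"
       and C="[(1,0,0,[],0,[])]"])
       apply code_simp
      using h34 apply auto[1]
     apply code_simp
    by (rule dnz1)
  show "qcm (qcm x1 (qcm x2 x3 (r^2)) (r^2)) (qcm x2 x3 (r^2)) (r*s) = qcm x2 (qcm (qcm x1 (qcm x2 x3 (r^2)) (r^2)) x3 (r*s)) (r^2)" using h22 by (simp add: ev_fqc' ev_fg ev_fneg gs mv_simps y4_def y5_def y6_def y7_def y8_def y9_def)
  show "qcm (qcm (qcm (qcm x1 (qcm x2 x3 (r^2)) (r^2)) x3 (r*s)) x2 (inverse (s^2))) x3 ((r*s)^2) = 0" using h33 by (simp add: ev_fqc' ev_fg ev_fneg gs mv_simps y4_def y5_def y6_def y7_def y8_def y9_def)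
  show "qcm (qcm (qcm x1 (qcm x2 x3 (r^2)) (r^2)) x3 (r*s)) (qcm x2 x3 (r^2)) (1) = 0" using h25 by (simp add: ev_fqc' ev_fg ev_fneg gs mv_simps y4_def y5_def y6_def y7_def y8_def y9_def)
  show "qcm (qcm (qcm x1 (qcm x2 x3 (r^2)) (r^2)) x3 (r*s)) (qcm (qcm x2 x3 (r^2)) x3 (r*s)) (s^2) = 0" using h31 by (simp add: ev_fqc' ev_fg ev_fneg gs mv_simps y4_def y5_def y6_def y7_def y8_def y9_def)
  show "qcm (qcm (qcm (qcm x1 (qcm x2 x3 (r^2)) (r^2)) x3 (r*s)) x2 (inverse (s^2))) (qcm x2 x3 (r^2)) (s^2) = 0" using h27 by (simp add: ev_fqc' ev_fg ev_fneg gs mv_simps y4_def y5_def y6_def y7_def y8_def y9_def)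
  show "qcm (qcm (qcm (qcm x1 (qcm x2 x3 (r^2)) (r^2)) x3 (r*s)) x2 (inverse (s^2))) (qcm (qcm x2 x3 (r^2)) x3 (r*s)) ((r*s^2)^2) = 0" using h35 by (simp add: ev_fqc' ev_fg ev_fneg gs mv_simps y4_def y5_def y6_def y7_def y8_def y9_def)
qed

lemma (in sc2) A3_lem:
  fixes x1 x2 x3 :: "'a"
  assumes "qcm x1 x3 (1) = 0"
    and "qcm x1 (qcm x1 x2 (r^2)) (s^2) = 0"
    and "qcm (qcm x1 x2 (r^2)) x2 (s^2) = 0"
    and "qcm x2 (qcm x2 x3 (r^2)) (s^2) = 0"
    and "qcm (qcm x2 x3 (r^2)) x3 (s^2) = 0"
  shows "qcm x1 (qcm x1 (qcm x2 x3 (r^2)) (r^2)) (s^2) = 0"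
    and "qcm (qcm x1 (qcm x2 x3 (r^2)) (r^2)) (qcm x2 x3 (r^2)) (s^2) = 0"
proof -
  define y4 where "y4 = qcm x1 x2 (r^2)"
  define y5 where "y5 = qcm x2 x3 (r^2)"
  define y6 where "y6 = qcm x1 y5 (r^2)"
  define g where "g = (!) [0, x1, x2, x3, y4, y5, y6]"
  have gs: "g 1 = x1" "g 2 = x2" "g 3 = x3" "g 4 = y4" "g 5 = y5" "g 6 = y6" "g (Suc 0) = x1" by (simp_all add: g_def)
  have h0: "ev g (fdef 4 (fqc (fg 1) (fg 2) (1,2,0))) = 0" by (simp add: ev_fdef ev_fqc' ev_fg gs mv_simps y4_def y5_def y6_def)
  have h1: "ev g (fdef 5 (fqc (fg 2) (fg 3) (1,2,0))) = 0" by (simp add: ev_fdef ev_fqc' ev_fg gs mv_simps y4_def y5_def y6_def)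
  have h2: "ev g (fdef 6 (fqc (fg 1) (fg 5) (1,2,0))) = 0" by (simp add: ev_fdef ev_fqc' ev_fg gs mv_simps y4_def y5_def y6_def)
  have h3: "ev g (fqc (fg 1) (fg 3) (1,0,0)) = 0" using assms(1) by (simp add: ev_fqc' ev_fg gs mv_simps y4_def y5_def y6_def)
  have h4: "ev g (fqc (fg 1) (fg 4) (1,0,2)) = 0" using assms(2) by (simp add: ev_fqc' ev_fg gs mv_simps y4_def y5_def y6_def)
  have h5: "ev g (fqc (fg 4) (fg 2) (1,0,2)) = 0" using assms(3) by (simp add: ev_fqc' ev_fg gs mv_simps y4_def y5_def y6_def)
  have h6: "ev g (fqc (fg 2) (fg 5) (1,0,2)) = 0" using assms(4) by (simp add: ev_fqc' ev_fg gs mv_simps y4_def y5_def y6_def)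
  have h7: "ev g (fqc (fg 5) (fg 3) (1,0,2)) = 0" using assms(5) by (simp add: ev_fqc' ev_fg gs mv_simps y4_def y5_def y6_def)
  have h13: "ev g (fqc (fg 3) (fg 6) (1,0,(-2))) = 0"
    apply (rule check2[where ds="[(1,0,0)]" and H="[fdef 6 (fqc (fg 1) (fg 5) (1,2,0)), fqc (fg 1) (fg 3) (1,0,0), fqc (fg 5) (fg 3) (1,0,2)]"
       and C="[(1,2,(-2),[5],1,[]), (1,2,(-2),[],2,[1]), ((-1),0,(-2),[],0,[3]), (1,0,0,[3],0,[]), ((-1),0,0,[],1,[5]), ((-1),0,(-2),[1],2,[])]"])
       apply code_simp
      using h2 h3 h7 apply auto[1]
     apply code_simp
    by (rule dnz1)
  have h14: "ev g (fqc (fg 1) (fg 6) (1,0,2)) = 0"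
    apply (rule check2[where ds="[(1,0,0)]" and H="[fdef 4 (fqc (fg 1) (fg 2) (1,2,0)), fdef 5 (fqc (fg 2) (fg 3) (1,2,0)), fdef 6 (fqc (fg 1) (fg 5) (1,2,0)), fqc (fg 1) (fg 3) (1,0,0), fqc (fg 1) (fg 4) (1,0,2)]"
       and C="[((-1),2,2,[3],0,[1]), (1,2,2,[],1,[1,1]), (1,2,2,[],3,[2,1]), ((-1),2,2,[2],3,[1]), (1,0,2,[],0,[3,1]), ((-1),0,2,[1],1,[1]), ((-1),2,0,[1],1,[1]), ((-1),0,2,[],2,[1]), (1,0,2,[4],3,[]), (1,0,0,[],4,[3]), ((-1),2,0,[3],4,[]), ((-1),2,0,[],3,[4]), (1,2,0,[1,3],0,[]), ((-1),2,0,[1],3,[2]), (1,2,0,[1,2],3,[]), ((-1),0,0,[1],0,[3]), (1,0,0,[1,1],1,[]), (1,0,0,[1],2,[])]"])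
       apply code_simp
      using h0 h1 h2 h3 h4 apply auto[1]
     apply code_simp
    by (rule dnz1)
  have h15: "ev g (fqc (fg 1) (fg 6) (1,0,2)) = 0"
    apply (rule check2[where ds="[(1,0,0)]" and H="[fqc (fg 1) (fg 6) (1,0,2)]"
       and C="[(1,0,0,[],0,[])]"])
       apply code_simp
      using h14 apply auto[1]
     apply code_simp
    by (rule dnz1)
  have h17: "ev g (fqc (fg 2) (fg 6) (1,0,0)) = 0"
    apply (rule check2[where ds="[(1,2,2), (1,4,0)]" and H="[fdef 4 (fqc (fg 1) (fg 2) (1,2,0)), fdef 5 (fqc (fg 2) (fg 3) (1,2,0)), fdef 6 (fqc (fg 1) (fg 5) (1,2,0)), fqc (fg 1) (fg 3) (1,0,0), fqc (fg 4) (fg 2) (1,0,2), fqc (fg 2) (fg 5) (1,0,2)]"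
       and C="[((-1),4,2,[5],0,[]), ((-1),6,0,[],5,[1]), ((-1),2,2,[],2,[2]), ((-1),4,0,[],2,[2]), (1,2,2,[2],2,[]), (1,4,0,[2],2,[]), (1,0,2,[],0,[5]), (1,2,0,[],0,[5]), (1,2,0,[1],5,[]), ((-1),6,0,[3],0,[2]), (1,6,0,[],1,[1,2]), (1,6,0,[],3,[2,2]), ((-1),4,2,[2],3,[2]), ((-1),6,0,[2],3,[2]), (1,2,2,[],0,[3,2]), (1,4,0,[],0,[3,2]), ((-1),4,0,[1],1,[2]), ((-1),0,2,[4],1,[]), ((-1),2,0,[4],1,[]), ((-1),2,0,[],4,[3]), (1,6,0,[3],4,[]), (1,4,2,[],1,[4]), (1,4,2,[2,3],0,[]), ((-1),4,2,[2],1,[1]), (1,4,2,[2,2],3,[]), ((-1),2,2,[2],0,[3]), ((-1),0,2,[],0,[2,3]), (1,0,2,[1,2],1,[])]"])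
       apply code_simp
      using h0 h1 h2 h3 h5 h6 apply auto[1]
     apply code_simp
    by (rule dnz2)
  have h18: "ev g (fqc (fg 5) (fg 6) (1,0,(-2))) = 0"
    apply (rule check2[where ds="[(1,0,0)]" and H="[fdef 5 (fqc (fg 2) (fg 3) (1,2,0)), fqc (fg 3) (fg 6) (1,0,(-2)), fqc (fg 2) (fg 6) (1,0,0)]"
       and C="[((-1),0,(-2),[6],0,[]), ((-1),2,0,[],1,[2]), (1,0,(-2),[],2,[3]), ((-1),2,0,[3],2,[]), (1,0,0,[],0,[6]), (1,0,0,[2],1,[])]"])
       apply code_simp
      using h1 h13 h17 apply auto[1]
     apply code_simp
    by (rule dnz1)
  have h19: "ev g (fqc (fg 6) (fg 5) (1,0,2)) = 0"
    apply (rule check2[where ds="[(1,0,0)]" and H="[fqc (fg 5) (fg 6) (1,0,(-2))]"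
       and C="[((-1),0,2,[],0,[])]"])
       apply code_simp
      using h18 apply auto[1]
     apply code_simp
    by (rule dnz1)
  show "qcm x1 (qcm x1 (qcm x2 x3 (r^2)) (r^2)) (s^2) = 0" using h15 by (simp add: ev_fqc' ev_fg ev_fneg gs mv_simps y4_def y5_def y6_def)
  show "qcm (qcm x1 (qcm x2 x3 (r^2)) (r^2)) (qcm x2 x3 (r^2)) (s^2) = 0" using h19 by (simp add: ev_fqc' ev_fg ev_fneg gs mv_simps y4_def y5_def y6_def)
qed

lemma (in sc2) B3a_lem:
  fixes x1 x2 x3 :: "'a"
  assumes "qcm x1 x3 (1) = 0"
    and "qcm x1 (qcm x1 x2 (r^2)) (s^2) = 0"
    and "qcm (qcm x1 x2 (r^2)) x2 (s^2) = 0"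
    and "qcm x2 (qcm x2 x3 (r^2)) (s^2) = 0"
    and "qcm (qcm (qcm x2 x3 (r^2)) x3 (r*s)) x3 (s^2) = 0"
  shows "qcm (qcm x1 x2 (r^2)) (qcm (qcm x1 x2 (r^2)) x3 (r^2)) (s^2) = 0"
    and "qcm (qcm (qcm (qcm x1 x2 (r^2)) x3 (r^2)) x3 (r*s)) x3 (s^2) = 0"
proof -
  define y4 where "y4 = qcm x1 x2 (r^2)"
  define y5 where "y5 = qcm x2 x3 (r^2)"
  define y6 where "y6 = qcm y5 x3 (r*s)"
  define y7 where "y7 = qcm y4 x3 (r^2)"
  define y8 where "y8 = qcm y7 x3 (r*s)"
  define g where "g = (!) [0, x1, x2, x3, y4, y5, y6, y7, y8]"
  have gs: "g 1 = x1" "g 2 = x2" "g 3 = x3" "g 4 = y4" "g 5 = y5" "g 6 = y6" "g 7 = y7" "g 8 = y8" "g (Suc 0) = x1" by (simp_all add: g_def)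
  have h0: "ev g (fdef 4 (fqc (fg 1) (fg 2) (1,2,0))) = 0" by (simp add: ev_fdef ev_fqc' ev_fg gs mv_simps y4_def y5_def y6_def y7_def y8_def)
  have h1: "ev g (fdef 5 (fqc (fg 2) (fg 3) (1,2,0))) = 0" by (simp add: ev_fdef ev_fqc' ev_fg gs mv_simps y4_def y5_def y6_def y7_def y8_def)
  have h2: "ev g (fdef 6 (fqc (fg 5) (fg 3) (1,1,1))) = 0" by (simp add: ev_fdef ev_fqc' ev_fg gs mv_simps y4_def y5_def y6_def y7_def y8_def)
  have h3: "ev g (fdef 7 (fqc (fg 4) (fg 3) (1,2,0))) = 0" by (simp add: ev_fdef ev_fqc' ev_fg gs mv_simps y4_def y5_def y6_def y7_def y8_def)
  have h4: "ev g (fdef 8 (fqc (fg 7) (fg 3) (1,1,1))) = 0" by (simp add: ev_fdef ev_fqc' ev_fg gs mv_simps y4_def y5_def y6_def y7_def y8_def)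
  have h5: "ev g (fqc (fg 1) (fg 3) (1,0,0)) = 0" using assms(1) by (simp add: ev_fqc' ev_fg gs mv_simps y4_def y5_def y6_def y7_def y8_def)
  have h6: "ev g (fqc (fg 1) (fg 4) (1,0,2)) = 0" using assms(2) by (simp add: ev_fqc' ev_fg gs mv_simps y4_def y5_def y6_def y7_def y8_def)
  have h7: "ev g (fqc (fg 4) (fg 2) (1,0,2)) = 0" using assms(3) by (simp add: ev_fqc' ev_fg gs mv_simps y4_def y5_def y6_def y7_def y8_def)
  have h8: "ev g (fqc (fg 2) (fg 5) (1,0,2)) = 0" using assms(4) by (simp add: ev_fqc' ev_fg gs mv_simps y4_def y5_def y6_def y7_def y8_def)
  have h9: "ev g (fqc (fg 6) (fg 3) (1,0,2)) = 0" using assms(5) by (simp add: ev_fqc' ev_fg gs mv_simps y4_def y5_def y6_def y7_def y8_def)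
  have h15: "ev g (fqc (fg 1) (fg 7) (1,0,2)) = 0"
    apply (rule check2[where ds="[(1,0,0)]" and H="[fdef 7 (fqc (fg 4) (fg 3) (1,2,0)), fqc (fg 1) (fg 3) (1,0,0), fqc (fg 1) (fg 4) (1,0,2)]"
       and C="[(1,0,2,[4],1,[]), ((-1),0,2,[],0,[1]), (1,0,0,[],2,[3]), ((-1),2,0,[3],2,[]), ((-1),2,0,[],1,[4]), (1,0,0,[1],0,[])]"])
       apply code_simp
      using h3 h5 h6 apply auto[1]
     apply code_simp
    by (rule dnz1)
  have h18: "ev g (fqc (fg 2) (fg 7) (1,0,0)) = 0"
    apply (rule check2[where ds="[(1,0,2), (1,2,0)]" and H="[fdef 4 (fqc (fg 1) (fg 2) (1,2,0)), fdef 5 (fqc (fg 2) (fg 3) (1,2,0)), fdef 7 (fqc (fg 4) (fg 3) (1,2,0)), fqc (fg 1) (fg 3) (1,0,0), fqc (fg 4) (fg 2) (1,0,2), fqc (fg 2) (fg 5) (1,0,2)]"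
       and C="[((-1),0,2,[],2,[2]), ((-1),2,0,[],2,[2]), ((-1),0,0,[],4,[3]), (1,4,0,[3],4,[]), (1,2,2,[],1,[4]), (1,0,2,[2],2,[]), (1,2,0,[2],2,[]), (1,2,2,[3],0,[2]), ((-1),2,2,[],1,[1,2]), ((-1),2,2,[],3,[2,2]), (1,2,2,[2],3,[2]), (1,4,0,[2],3,[2]), ((-1),0,2,[],0,[3,2]), ((-1),2,0,[],0,[3,2]), (1,0,2,[1],1,[2]), ((-1),2,2,[5],0,[]), ((-1),4,0,[],5,[1]), ((-1),4,0,[2,3],0,[]), (1,4,0,[2],1,[1]), ((-1),4,0,[2,2],3,[]), (1,2,0,[2],0,[3]), (1,0,0,[],0,[2,3]), ((-1),0,0,[1,2],1,[]), (1,0,0,[1],5,[])]"])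
       apply code_simp
      using h0 h1 h3 h5 h7 h8 apply auto[1]
     apply code_simp
    by (rule dnz5)
  have h19: "ev g (fqc (fg 4) (fg 7) (1,0,2)) = 0"
    apply (rule check2[where ds="[(1,0,0)]" and H="[fdef 4 (fqc (fg 1) (fg 2) (1,2,0)), fqc (fg 1) (fg 7) (1,0,2), fqc (fg 2) (fg 7) (1,0,0)]"
       and C="[((-1),0,2,[7],0,[]), ((-1),2,2,[],2,[1]), (1,0,0,[],1,[2]), ((-1),2,0,[2],1,[]), (1,0,0,[],0,[7]), (1,0,0,[1],2,[])]"])
       apply code_simp
      using h0 h15 h18 apply auto[1]
     apply code_simp
    by (rule dnz1)
  have h20: "ev g (fqc (fg 4) (fg 7) (1,0,2)) = 0"
    apply (rule check2[where ds="[(1,0,0)]" and H="[fqc (fg 4) (fg 7) (1,0,2)]"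
       and C="[(1,0,0,[],0,[])]"])
       apply code_simp
      using h19 apply auto[1]
     apply code_simp
    by (rule dnz1)
  have h21: "ev g (fqc (fg 3) (fg 8) (1,0,(-2))) = 0"
    apply (rule check2[where ds="[(1,1,0)]" and H="[fdef 4 (fqc (fg 1) (fg 2) (1,2,0)), fdef 5 (fqc (fg 2) (fg 3) (1,2,0)), fdef 6 (fqc (fg 5) (fg 3) (1,1,1)), fdef 7 (fqc (fg 4) (fg 3) (1,2,0)), fdef 8 (fqc (fg 7) (fg 3) (1,1,1)), fqc (fg 1) (fg 3) (1,0,0), fqc (fg 6) (fg 3) (1,0,2)]"
       and C="[(1,4,1,[3,3,3],0,[]), ((-1),4,1,[3,3],1,[1]), ((-1),4,1,[3,3],5,[2]), ((-1),2,1,[3],1,[3,1]), ((-1),4,1,[3],5,[3,2]), ((-1),0,1,[],1,[3,3,1]), ((-1),4,1,[],5,[3,3,2]), (1,0,1,[2,3,3],5,[]), ((-1),1,0,[2,3],5,[3]), ((-1),2,(-1),[2,3],5,[3]), (1,3,(-2),[2],5,[3,3]), ((-1),1,(-2),[],0,[3,3,3]), (1,2,1,[1,3,3],1,[]), ((-1),1,0,[1,3],1,[3]), ((-1),2,(-1),[1,3],1,[3]), (1,1,(-2),[1],1,[3,3]), ((-1),0,1,[],2,[3,1]), ((-1),1,(-2),[],3,[3,3]), (1,3,0,[3],2,[1]), (1,1,0,[3],3,[3]), (1,2,(-1),[3],3,[3]), (1,1,0,[3],0,[3,3]), (1,2,(-1),[3],0,[3,3]), (1,3,(-2),[3],0,[3,3]),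 ((-1),1,0,[],1,[1,3,3]), ((-1),2,(-1),[],1,[1,3,3]), ((-1),3,(-2),[],1,[1,3,3]), ((-1),1,0,[],5,[2,3,3]), ((-1),2,(-1),[],5,[2,3,3]), ((-1),3,(-2),[],5,[2,3,3]), (1,1,0,[5],5,[3]), (1,2,(-1),[5],5,[3]), (1,3,(-2),[5],5,[3]), (1,0,1,[],2,[1,3]), ((-1),3,(-2),[],2,[1,3]), ((-1),1,2,[3,5],5,[]), ((-1),2,1,[3,5],5,[]), ((-1),3,0,[3,5],5,[]), ((-1),2,1,[3,3],3,[]), (1,1,(-2),[1],2,[3]), ((-1),1,0,[1,3],2,[]), ((-1),1,(-2),[],4,[3]), (1,3,(-2),[],6,[1]), ((-1),0,1,[6],5,[]), (1,3,(-2),[6],5,[]), (1,1,0,[3],4,[]), ((-1),2,1,[3,3],0,[3]), ((-1),3,0,[3,3],0,[3]), ((-1),4,(-1),[3,3],0,[3]), (1,2,1,[3],1,[1,3]), (1,3,0,[3],1,[1,3]), (1,4,(-1),[3],1,[1,3]), (1,2,1,[3],5,[2,3]), (1,3,0,[3],5,[2,3]), (1,4,(-1),[3],5,[2,3]), (1,0,1,[],1,[3,1,3]), (1,1,0,[],1,[3,1,3]), (1,2,(-1),[],1,[3,1,3]), (1,2,1,[],5,[3,2,3]), (1,3,0,[],5,[3,2,3]), (1,4,(-1),[],5,[3,2,3]), ((-1),1,(-2),[1],6,[])]"])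
       apply code_simp
      using h0 h1 h2 h3 h4 h5 h9 apply auto[1]
     apply code_simp
    by (rule dnz0)
  have h22: "ev g (fqc (fg 8) (fg 3) (1,0,2)) = 0"
    apply (rule check2[where ds="[(1,0,0)]" and H="[fqc (fg 3) (fg 8) (1,0,(-2))]"
       and C="[((-1),0,2,[],0,[])]"])
       apply code_simp
      using h21 apply auto[1]
     apply code_simp
    by (rule dnz1)
  show "qcm (qcm x1 x2 (r^2)) (qcm (qcm x1 x2 (r^2)) x3 (r^2)) (s^2) = 0" using h20 by (simp add: ev_fqc' ev_fg ev_fneg gs mv_simps y4_def y5_def y6_def y7_def y8_def)
  show "qcm (qcm (qcm (qcm x1 x2 (r^2)) x3 (r^2)) x3 (r*s)) x3 (s^2) = 0" using h22 by (simp add: ev_fqc' ev_fg ev_fneg gs mv_simps y4_def y5_def y6_def y7_def y8_def)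
qed

lemma (in sc2) B4_lem:
  fixes x1 x2 x3 x4 :: "'a"
  assumes "qcm x1 x3 (1) = 0"
    and "qcm x1 x4 (1) = 0"
    and "qcm x2 x4 (1) = 0"
    and "qcm x1 (qcm x1 x2 (r^2)) (s^2) = 0"
    and "qcm (qcm x1 x2 (r^2)) x2 (s^2) = 0"
    and "qcm x2 (qcm x2 x3 (r^2)) (s^2) = 0"
    and "qcm (qcm x2 x3 (r^2)) x3 (s^2) = 0"
    and "qcm x3 (qcm x3 x4 (r^2)) (s^2) = 0"
    and "qcm (qcm (qcm x3 x4 (r^2)) x4 (r*s)) x4 (s^2) = 0"
  shows "qcm x2 (qcm (qcm x1 (qcm x2 (qcm x3 x4 (r^2)) (r^2)) (r^2)) x4 (r*s)) (1) = 0"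
proof -
  define y5 where "y5 = qcm x3 x4 (r^2)"
  define y6 where "y6 = qcm x2 y5 (r^2)"
  define y7 where "y7 = qcm x1 y6 (r^2)"
  define y8 where "y8 = qcm y7 x4 (r*s)"
  define y9 where "y9 = qcm x1 x2 (r^2)"
  define y10 where "y10 = qcm x2 x3 (r^2)"
  define y11 where "y11 = qcm y5 x4 (r*s)"
  define y12 where "y12 = qcm y6 x4 (r*s)"
  define g where "g = (!) [0, x1, x2, x3, x4, y5, y6, y7, y8, y9, y10, y11, y12]"
  have gs: "g 1 = x1" "g 2 = x2" "g 3 = x3" "g 4 = x4" "g 5 = y5" "g 6 = y6" "g 7 = y7" "g 8 = y8" "g 9 = y9" "g 10 = y10" "g 11 = y11" "g 12 = y12" "g (Suc 0) = x1" by (simp_all add: g_def)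
  have h0: "ev g (fdef 5 (fqc (fg 3) (fg 4) (1,2,0))) = 0" by (simp add: ev_fdef ev_fqc' ev_fg gs mv_simps y5_def y6_def y7_def y8_def y9_def y10_def y11_def y12_def)
  have h1: "ev g (fdef 6 (fqc (fg 2) (fg 5) (1,2,0))) = 0" by (simp add: ev_fdef ev_fqc' ev_fg gs mv_simps y5_def y6_def y7_def y8_def y9_def y10_def y11_def y12_def)
  have h2: "ev g (fdef 7 (fqc (fg 1) (fg 6) (1,2,0))) = 0" by (simp add: ev_fdef ev_fqc' ev_fg gs mv_simps y5_def y6_def y7_def y8_def y9_def y10_def y11_def y12_def)
  have h3: "ev g (fdef 8 (fqc (fg 7) (fg 4) (1,1,1))) = 0" by (simp add: ev_fdef ev_fqc' ev_fg gs mv_simps y5_def y6_def y7_def y8_def y9_def y10_def y11_def y12_def)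
  have h4: "ev g (fdef 9 (fqc (fg 1) (fg 2) (1,2,0))) = 0" by (simp add: ev_fdef ev_fqc' ev_fg gs mv_simps y5_def y6_def y7_def y8_def y9_def y10_def y11_def y12_def)
  have h5: "ev g (fdef 10 (fqc (fg 2) (fg 3) (1,2,0))) = 0" by (simp add: ev_fdef ev_fqc' ev_fg gs mv_simps y5_def y6_def y7_def y8_def y9_def y10_def y11_def y12_def)
  have h6: "ev g (fdef 11 (fqc (fg 5) (fg 4) (1,1,1))) = 0" by (simp add: ev_fdef ev_fqc' ev_fg gs mv_simps y5_def y6_def y7_def y8_def y9_def y10_def y11_def y12_def)
  have h7: "ev g (fdef 12 (fqc (fg 6) (fg 4) (1,1,1))) = 0" by (simp add: ev_fdef ev_fqc' ev_fg gs mv_simps y5_def y6_def y7_def y8_def y9_def y10_def y11_def y12_def)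
  have h8: "ev g (fqc (fg 1) (fg 3) (1,0,0)) = 0" using assms(1) by (simp add: ev_fqc' ev_fg gs mv_simps y5_def y6_def y7_def y8_def y9_def y10_def y11_def y12_def)
  have h9: "ev g (fqc (fg 1) (fg 4) (1,0,0)) = 0" using assms(2) by (simp add: ev_fqc' ev_fg gs mv_simps y5_def y6_def y7_def y8_def y9_def y10_def y11_def y12_def)
  have h10: "ev g (fqc (fg 2) (fg 4) (1,0,0)) = 0" using assms(3) by (simp add: ev_fqc' ev_fg gs mv_simps y5_def y6_def y7_def y8_def y9_def y10_def y11_def y12_def)
  have h11: "ev g (fqc (fg 1) (fg 9) (1,0,2)) = 0" using assms(4) by (simp add: ev_fqc' ev_fg gs mv_simps y5_def y6_def y7_def y8_def y9_def y10_def y11_def y12_def)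
  have h12: "ev g (fqc (fg 9) (fg 2) (1,0,2)) = 0" using assms(5) by (simp add: ev_fqc' ev_fg gs mv_simps y5_def y6_def y7_def y8_def y9_def y10_def y11_def y12_def)
  have h13: "ev g (fqc (fg 2) (fg 10) (1,0,2)) = 0" using assms(6) by (simp add: ev_fqc' ev_fg gs mv_simps y5_def y6_def y7_def y8_def y9_def y10_def y11_def y12_def)
  have h14: "ev g (fqc (fg 10) (fg 3) (1,0,2)) = 0" using assms(7) by (simp add: ev_fqc' ev_fg gs mv_simps y5_def y6_def y7_def y8_def y9_def y10_def y11_def y12_def)
  have h15: "ev g (fqc (fg 3) (fg 5) (1,0,2)) = 0" using assms(8) by (simp add: ev_fqc' ev_fg gs mv_simps y5_def y6_def y7_def y8_def y9_def y10_def y11_def y12_def)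
  have h16: "ev g (fqc (fg 11) (fg 4) (1,0,2)) = 0" using assms(9) by (simp add: ev_fqc' ev_fg gs mv_simps y5_def y6_def y7_def y8_def y9_def y10_def y11_def y12_def)
  have h26: "ev g (fqc (fg 1) (fg 5) (1,0,0)) = 0"
    apply (rule check2[where ds="[(1,0,0)]" and H="[fdef 5 (fqc (fg 3) (fg 4) (1,2,0)), fqc (fg 1) (fg 3) (1,0,0), fqc (fg 1) (fg 4) (1,0,0)]"
       and C="[((-1),2,0,[4],1,[]), ((-1),0,0,[],0,[1]), ((-1),2,0,[],2,[3]), (1,0,0,[3],2,[]), (1,0,0,[],1,[4]), (1,0,0,[1],0,[])]"])
       apply code_simp
      using h0 h8 h9 apply auto[1]
     apply code_simp
    by (rule dnz1)
  have h31: "ev g (fqc (fg 2) (fg 6) (1,0,2)) = 0"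
    apply (rule check2[where ds="[(1,0,0)]" and H="[fdef 5 (fqc (fg 3) (fg 4) (1,2,0)), fdef 6 (fqc (fg 2) (fg 5) (1,2,0)), fdef 10 (fqc (fg 2) (fg 3) (1,2,0)), fqc (fg 2) (fg 4) (1,0,0), fqc (fg 2) (fg 10) (1,0,2)]"
       and C="[((-1),2,2,[4],2,[2]), (1,2,2,[],0,[2,2]), (1,2,2,[],3,[3,2]), ((-1),2,2,[3],3,[2]), (1,0,2,[],2,[4,2]), ((-1),0,2,[2],0,[2]), ((-1),2,0,[2],0,[2]), (1,0,2,[10],3,[]), (1,0,0,[],4,[4]), ((-1),0,2,[],1,[2]), ((-1),2,0,[4],4,[]), ((-1),2,0,[],3,[10]), (1,2,0,[2,4],2,[]), ((-1),2,0,[2],3,[3]), (1,2,0,[2,3],3,[]), ((-1),0,0,[2],2,[4]), (1,0,0,[2,2],0,[]), (1,0,0,[2],1,[])]"])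
       apply code_simp
      using h0 h1 h5 h10 h13 apply auto[1]
     apply code_simp
    by (rule dnz1)
  have h39: "ev g (fqc (fg 2) (fg 7) (1,0,0)) = 0"
    apply (rule check2[where ds="[(1,2,2), (1,4,0)]" and H="[fdef 6 (fqc (fg 2) (fg 5) (1,2,0)), fdef 7 (fqc (fg 1) (fg 6) (1,2,0)), fdef 9 (fqc (fg 1) (fg 2) (1,2,0)), fqc (fg 9) (fg 2) (1,0,2), fqc (fg 1) (fg 5) (1,0,0), fqc (fg 2) (fg 6) (1,0,2)]"
       and C="[((-1),6,0,[5],2,[2]), (1,6,0,[],0,[1,2]), (1,6,0,[],4,[2,2]), ((-1),4,2,[2],4,[2]), ((-1),6,0,[2],4,[2]), (1,2,2,[],2,[5,2]), (1,4,0,[],2,[5,2]), ((-1),4,0,[1],0,[2]), ((-1),0,2,[9],0,[]), ((-1),2,0,[9],0,[]), ((-1),2,0,[],3,[5]), ((-1),2,2,[],1,[2]), ((-1),4,0,[],1,[2]), (1,6,0,[5],3,[]), (1,4,2,[],0,[9]), (1,4,2,[2,5],2,[]), ((-1),4,2,[2],0,[1]), (1,4,2,[2,2],4,[]), ((-1),2,2,[2],2,[5]), ((-1),0,2,[],2,[2,5]), (1,0,2,[1,2],0,[]), (1,2,2,[2],1,[]), (1,4,0,[2],1,[]), (1,0,2,[],2,[6]), (1,2,0,[],2,[6]), ((-1),4,2,[6],2,[]), ((-1),6,0,[],5,[1]), (1,2,0,[1],5,[])]"])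
       apply code_simp
      using h1 h2 h4 h12 h26 h31 apply auto[1]
     apply code_simp
    by (rule dnz2)
  have h40: "ev g (fqc (fg 2) (fg 8) (1,0,0)) = 0"
    apply (rule check2[where ds="[(1,0,0)]" and H="[fdef 8 (fqc (fg 7) (fg 4) (1,1,1)), fqc (fg 2) (fg 4) (1,0,0), fqc (fg 2) (fg 7) (1,0,0)]"
       and C="[(1,0,0,[7],1,[]), ((-1),0,0,[],0,[2]), (1,0,0,[],2,[4]), ((-1),1,1,[4],2,[]), ((-1),1,1,[],1,[7]), (1,0,0,[2],0,[])]"])
       apply code_simp
      using h3 h10 h39 apply auto[1]
     apply code_simp
    by (rule dnz1)
  have h41: "ev g (fqc (fg 2) (fg 8) (1,0,0)) = 0"
    apply (rule check2[where ds="[(1,0,0)]" and H="[fqc (fg 2) (fg 8) (1,0,0)]"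
       and C="[(1,0,0,[],0,[])]"])
       apply code_simp
      using h40 apply auto[1]
     apply code_simp
    by (rule dnz1)
  show "qcm x2 (qcm (qcm x1 (qcm x2 (qcm x3 x4 (r^2)) (r^2)) (r^2)) x4 (r*s)) (1) = 0" using h41 by (simp add: ev_fqc' ev_fg ev_fneg gs mv_simps y5_def y6_def y7_def y8_def y9_def y10_def y11_def y12_def)
qed




locale U = sc2 c r s for c :: "complex \<Rightarrow> 'a::ring_1" and r s +
  fixes n :: nat and e f w wp winv wpinv :: "nat \<Rightarrow> 'a"
  assumes n2: "n \<ge> 2" and rel: "Urs_rel n r s c e f w wp winv wpinv"
begin

lemma winv_w: "i \<in> {1..n} \<Longrightarrow> winv i * w i = 1"
  using rel unfolding Urs_rel_def by blast

lemma conj_e: "i \<in> {1..n} \<Longrightarrow> j \<in> {1..n} \<Longrightarrow> w j * e i * winv j = c (pairB n r s i j) * e i"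
  using rel unfolding Urs_rel_def by blast

lemma serre: "i \<in> {1..n} \<Longrightarrow> j \<in> {1..n} \<Longrightarrow> i \<noteq> j \<Longrightarrow>
   ((adl e w winv i) ^^ nat (1 - cartanB n i j)) (e j) = 0"
  using rel unfolding Urs_rel_def by blast

definition cj :: "nat \<Rightarrow> 'a \<Rightarrow> 'a" where "cj j x = w j * x * winv j"

lemma cj_mult: assumes "j \<in> {1..n}" shows "cj j (x * y) = cj j x * cj j y"
proof -
  have "cj j x * cj j y = w j * x * (winv j * w j) * y * winv j" by (simp add: cj_def mult.assoc)
  thus ?thesis using winv_w[OF assms] by (simp add: cj_def mult.assoc)
qed

lemma cj_c: "cj j (c q * x) = c q * cj j x"
  by (simp add: cj_def mult.assoc c_left_comm)

lemma cj_diff: "cj j (x - y) = cj j x - cj j y"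
  by (simp add: cj_def algebra_simps)

lemma cj_scal: assumes "j \<in> {1..n}" "cj j x = c al * x" "cj j y = c be * y"
  shows "cj j (qcm x y q) = c (al * be) * qcm x y q"
proof -
  have "cj j (qcm x y q) = qcm (c al * x) (c be * y) q"
    by (simp add: qcm_def cj_diff cj_c cj_mult[OF assms(1)] assms(2,3))
  also have "\<dots> = c (al * be) * qcm x y q"
    unfolding qcm_def by (simp add: algebra_simps cs)
  finally show ?thesis .
qed

lemma adl_scal: "cj i b = c al * b \<Longrightarrow> adl e w winv i b = qcm (e i) b al"
  by (simp add: adl_def cj_def qcm_def mult.assoc)

lemma cj_e: "i \<in> {1..n} \<Longrightarrow> j \<in> {1..n} \<Longrightarrow> cj j (e i) = c (pairB n r s i j) * e i"
  using conj_e by (simp add: cj_def)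

lemma far: assumes "1 \<le> i" "i + 2 \<le> j" "j \<le> n" shows "e i * e j = e j * e i" "e j * e i = e i * e j"
proof -
  have ij: "i \<in> {1..n}" "j \<in> {1..n}" using assms by auto
  have cb: "cartanB n i j = 0" using assms by (auto simp: cartanB_def)
  have pb: "pairB n r s j i = 1" using assms by (auto simp: pairB_def)
  have "adl e w winv i (e j) = 0" using serre[OF ij] cb assms by simp
  moreover have "adl e w winv i (e j) = qcm (e i) (e j) 1"
    by (rule adl_scal) (simp only: cj_e[OF ij(2) ij(1)] pb)
  ultimately show "e i * e j = e j * e i" by (simp add: qcm_1)
  thus "e j * e i = e i * e j" by simp
qed

lemma far_qcm: "1 \<le> i \<Longrightarrow> i + 2 \<le> j \<Longrightarrow> j \<le> n \<Longrightarrow> qcm (e i) (e j) 1 = 0"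
  using far by (simp add: qcm_1)

lemma id_sA1: "qcm x (qcm x y (r^2)) (s^2) = qcm x (qcm x y (s^2)) (r^2)"
proof -
  define g where "g = (!) [0, x, y]"
  have "ev g (fqc (fg 1) (fqc (fg 1) (fg 2) (1,2,0)) (1,0,2)) = ev g (fqc (fg 1) (fqc (fg 1) (fg 2) (1,0,2)) (1,2,0))"
    by (rule ring_id) code_simp
  thus ?thesis by (simp add: ev_fqc' g_def mv_simps)
qed

lemma id_sA2: "qcm (qcm x y (r^2)) y (s^2) = c (mv 1 2 2) * qcm y (qcm y x (inverse (r^2))) (inverse (s^2))"
proof -
  define g where "g = (!) [0, x, y]"
  have "ev g (fqc (fqc (fg 1) (fg 2) (1,2,0)) (fg 2) (1,0,2)) = ev g (fsc (1,2,2) (fqc (fg 2) (fqc (fg 2) (fg 1) (1,-2,0)) (1,0,-2)))"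
    by (rule ring_id) code_simp
  thus ?thesis by (simp add: ev_fqc' g_def mv_simps)
qed

lemma id_sB2: "qcm (qcm (qcm y z (r^2)) z (r*s)) z (s^2) = c (mv (-1) 3 3) * qcm z (qcm z (qcm z y (inverse (r^2))) (mv 1 (-1) (-1))) (inverse (s^2))"
proof -
  define g where "g = (!) [0, y, z]"
  have "ev g (fqc (fqc (fqc (fg 1) (fg 2) (1,2,0)) (fg 2) (1,1,1)) (fg 2) (1,0,2)) = ev g (fsc (-1,3,3) (fqc (fg 2) (fqc (fg 2) (fqc (fg 2) (fg 1) (1,-2,0)) (1,-1,-1)) (1,0,-2)))"
    by (rule ring_id) code_simp
  thus ?thesis by (simp add: ev_fqc' g_def mv_simps)
qed

lemma sA: assumes "1 \<le> i" "i + 2 \<le> n"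
  shows "qcm (e i) (qcm (e i) (e (i+1)) (r^2)) (s^2) = 0" "qcm (qcm (e i) (e (i+1)) (r^2)) (e (i+1)) (s^2) = 0"
proof -
  have ij: "i \<in> {1..n}" "i+1 \<in> {1..n}" using assms by auto
  have cb1: "cartanB n i (i+1) = -1" using assms by (auto simp: cartanB_def)
  have cb2: "cartanB n (i+1) i = -1" using assms by (auto simp: cartanB_def)
  have p1: "pairB n r s (i+1) i = s^2" by (simp add: pairB_def)
  have p2: "pairB n r s i i = r^2 * inverse (s^2)" using assms by (simp add: pairB_def)
  have p3: "pairB n r s i (i+1) = inverse (r^2)" by (simp add: pairB_def)
  have p4: "pairB n r s (i+1) (i+1) = r^2 * inverse (s^2)" using assms by (simp add: pairB_def)
  have sc1: "r^2 * inverse (s^2) * s^2 = r^2" using s0 by simp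
  have sc2: "r^2 * inverse (s^2) * inverse (r^2) = inverse (s^2)" using r0 by simp
  have a1: "adl e w winv i (e (i+1)) = qcm (e i) (e (i+1)) (s^2)"
    by (rule adl_scal) (simp only: cj_e[OF ij(2) ij(1)] p1)
  have a2: "adl e w winv i (qcm (e i) (e (i+1)) (s^2)) = qcm (e i) (qcm (e i) (e (i+1)) (s^2)) (r^2)"
    by (rule adl_scal) (simp only: cj_scal[OF ij(1) cj_e[OF ij(1) ij(1)] cj_e[OF ij(2) ij(1)]] p1 p2 sc1)
  have "((adl e w winv i) ^^ 2) (e (i+1)) = 0" using serre[OF ij] cb1 by simp
  hence "adl e w winv i (adl e w winv i (e (i+1))) = 0" by (simp add: numeral_2_eq_2)
  hence "qcm (e i) (qcm (e i) (e (i+1)) (s^2)) (r^2) = 0" by (simp only: a1 a2)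
  thus "qcm (e i) (qcm (e i) (e (i+1)) (r^2)) (s^2) = 0" by (simp add: id_sA1)
  have b1: "adl e w winv (i+1) (e i) = qcm (e (i+1)) (e i) (inverse (r^2))"
    by (rule adl_scal) (simp only: cj_e[OF ij(1) ij(2)] p3)
  have b2: "adl e w winv (i+1) (qcm (e (i+1)) (e i) (inverse (r^2))) = qcm (e (i+1)) (qcm (e (i+1)) (e i) (inverse (r^2))) (inverse (s^2))"
    by (rule adl_scal) (simp only: cj_scal[OF ij(2) cj_e[OF ij(2) ij(2)] cj_e[OF ij(1) ij(2)]] p3 p4 sc2)
  have "((adl e w winv (i+1)) ^^ 2) (e i) = 0" using serre[OF ij(2) ij(1)] cb2 by simp
  hence "adl e w winv (i+1) (adl e w winv (i+1) (e i)) = 0" by (simp add: numeral_2_eq_2)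
  hence "qcm (e (i+1)) (qcm (e (i+1)) (e i) (inverse (r^2))) (inverse (s^2)) = 0" by (simp only: b1 b2)
  thus "qcm (qcm (e i) (e (i+1)) (r^2)) (e (i+1)) (s^2) = 0" by (simp add: id_sA2)
qed

lemma sB: shows "qcm (e (n-1)) (qcm (e (n-1)) (e n) (r^2)) (s^2) = 0"
    "qcm (qcm (qcm (e (n-1)) (e n) (r^2)) (e n) (r*s)) (e n) (s^2) = 0"
proof -
  have ij: "n-1 \<in> {1..n}" "n \<in> {1..n}" using n2 by auto
  have nn: "n - 1 + 1 = n" using n2 by simp
  have cb1: "cartanB n (n-1) n = -1" using n2 by (auto simp: cartanB_def)
  have cb2: "cartanB n n (n-1) = -2" using n2 by (auto simp: cartanB_def)
  have p1: "pairB n r s n (n-1) = s^2" using n2 by (auto simp add: pairB_def)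
  have p2: "pairB n r s (n-1) (n-1) = r^2 * inverse (s^2)" using n2 by (auto simp add: pairB_def)
  have p3: "pairB n r s (n-1) n = inverse (r^2)" using n2 by (auto simp add: pairB_def)
  have p4: "pairB n r s n n = r * inverse s" by (simp add: pairB_def)
  have sc1: "r^2 * inverse (s^2) * s^2 = r^2" using s0 by simp
  have sc2: "r * inverse s * inverse (r^2) = mv 1 (-1) (-1)"
    using r0 by (simp add: mv_def power_int_minus power2_eq_square)
  have sc3: "r * inverse s * mv 1 (-1) (-1) = inverse (s^2)"
    using r0 by (simp add: mv_def power_int_minus power2_eq_square)
  have a1: "adl e w winv (n-1) (e n) = qcm (e (n-1)) (e n) (s^2)"
    by (rule adl_scal) (simp only: cj_e[OF ij(2) ij(1)] p1)
  have a2: "adl e w winv (n-1) (qcm (e (n-1)) (e n) (s^2)) = qcm (e (n-1)) (qcm (e (n-1)) (e n) (s^2)) (r^2)"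
    by (rule adl_scal) (simp only: cj_scal[OF ij(1) cj_e[OF ij(1) ij(1)] cj_e[OF ij(2) ij(1)]] p1 p2 sc1)
  have "((adl e w winv (n-1)) ^^ 2) (e n) = 0" using serre[OF ij] cb1 n2 by simp
  hence "adl e w winv (n-1) (adl e w winv (n-1) (e n)) = 0" by (simp add: numeral_2_eq_2)
  hence "qcm (e (n-1)) (qcm (e (n-1)) (e n) (s^2)) (r^2) = 0" by (simp only: a1 a2)
  thus "qcm (e (n-1)) (qcm (e (n-1)) (e n) (r^2)) (s^2) = 0" by (simp add: id_sA1)
  have b1: "adl e w winv n (e (n-1)) = qcm (e n) (e (n-1)) (inverse (r^2))"
    by (rule adl_scal) (simp only: cj_e[OF ij(1) ij(2)] p3)
  have b2: "adl e w winv n (qcm (e n) (e (n-1)) (inverse (r^2))) = qcm (e n) (qcm (e n) (e (n-1)) (inverse (r^2))) (mv 1 (-1) (-1))"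
    by (rule adl_scal) (simp only: cj_scal[OF ij(2) cj_e[OF ij(2) ij(2)] cj_e[OF ij(1) ij(2)]] p3 p4 sc2)
  have b3: "adl e w winv n (qcm (e n) (qcm (e n) (e (n-1)) (inverse (r^2))) (mv 1 (-1) (-1)))
     = qcm (e n) (qcm (e n) (qcm (e n) (e (n-1)) (inverse (r^2))) (mv 1 (-1) (-1))) (inverse (s^2))"
    by (rule adl_scal) (simp only: cj_scal[OF ij(2) cj_e[OF ij(2) ij(2)] cj_scal[OF ij(2) cj_e[OF ij(2) ij(2)] cj_e[OF ij(1) ij(2)]]] p3 p4 sc2 sc3)
  have "((adl e w winv n) ^^ 3) (e (n-1)) = 0" using serre[OF ij(2) ij(1)] cb2 n2 by simp
  hence "adl e w winv n (adl e w winv n (adl e w winv n (e (n-1)))) = 0" by (simp add: numeral_3_eq_3)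
  hence "qcm (e n) (qcm (e n) (qcm (e n) (e (n-1)) (inverse (r^2))) (mv 1 (-1) (-1))) (inverse (s^2)) = 0"
    by (simp only: b1 b2 b3)
  thus "qcm (qcm (qcm (e (n-1)) (e n) (r^2)) (e n) (r*s)) (e n) (s^2) = 0" by (simp add: id_sB2)
qed

end



context sc begin
definition sAp where "sAp x y \<longleftrightarrow> qcm x (qcm x y (r^2)) (s^2) = 0 \<and> qcm (qcm x y (r^2)) y (s^2) = 0"
definition sBp where "sBp y z \<longleftrightarrow> qcm y (qcm y z (r^2)) (s^2) = 0 \<and> qcm (qcm (qcm y z (r^2)) z (r*s)) z (s^2) = 0"
end

context U begin

lemma RE_same: "RE c r e i i = e i" by (simp add: RE_def)

lemma RE_step: assumes "i < j" shows "RE c r e i j = qcm (e i) (RE c r e (i+1) j) (r^2)"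
proof -
  have "j - i = Suc (j - Suc i)" using assms by arith
  thus ?thesis by (simp add: RE_def qcm_def mult.assoc)
qed

lemma RE_comm:
  assumes "1 \<le> i" "i \<le> j" "j \<le> n" "1 \<le> k" "k \<le> n" "k + 2 \<le> i \<or> j + 2 \<le> k"
  shows "e k * RE c r e i j = RE c r e i j * e k"
  using assms
proof (induction "j - i" arbitrary: i)
  case 0
  hence ij: "i = j" by simp
  show ?case
  proof (cases "k + 2 \<le> i")
    case True thus ?thesis using 0 ij far(1)[of k i] by (simp add: RE_same)
  next
    case False thus ?thesis using 0 ij far(2)[of i k] by (simp add: RE_same)
  qed
next
  case (Suc d)
  hence lt: "i < j" by simp
  have ih: "e k * RE c r e (i+1) j = RE c r e (i+1) j * e k" using Suc by auto
  have f: "e i * e k = e k * e i"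
  proof (cases "k + 2 \<le> i")
    case True thus ?thesis using Suc.prems far(2)[of k i] by simp
  next
    case False thus ?thesis using Suc.prems far(1)[of i k] by simp
  qed
  have "qcm (e i) (RE c r e (i+1) j) (r^2) * e k = e k * qcm (e i) (RE c r e (i+1) j) (r^2)"
    by (rule G1) (use f ih in auto)
  thus ?case by (simp add: RE_step[OF lt])
qed

lemma RE_right: assumes "1 \<le> i" "i < j" "j \<le> n" shows "RE c r e i j = qcm (RE c r e i (j-1)) (e j) (r^2)"
  using assms
proof (induction "j - i" arbitrary: i rule: less_induct)
  case (less i)
  show ?case
  proof (cases "j = i + 1")
    case True thus ?thesis by (simp add: RE_step RE_same)
  next
    case False
    hence lt: "i + 1 < j" using less.prems by simp
    have ih: "RE c r e (i+1) j = qcm (RE c r e (i+1) (j-1)) (e j) (r^2)"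
      using less lt by simp
    have c1: "e i * e j = e j * e i" using far(1)[of i j] less.prems lt by simp
    have "RE c r e i j = qcm (e i) (qcm (RE c r e (i+1) (j-1)) (e j) (r^2)) (r^2)"
      using RE_step[of i j] less.prems ih by simp
    also have "\<dots> = qcm (qcm (e i) (RE c r e (i+1) (j-1)) (r^2)) (e j) (r^2)"
      using G2[OF c1] by simp
    also have "qcm (e i) (RE c r e (i+1) (j-1)) (r^2) = RE c r e i (j-1)"
      using RE_step[of i "j-1"] lt by simp
    finally show ?thesis .
  qed
qed

lemma Ep_n: "REp n c r s e i n = qcm (RE c r e i n) (e n) (r*s)"
  by (simp add: REp_def qcm_def mult.assoc)

lemma Ep_step: assumes "j < n" shows "REp n c r s e i j = qcm (REp n c r s e i (j+1)) (e j) (inverse (s^2))"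
proof -
  have a: "n - j = Suc (n - (j+1))" using assms by arith
  have b: "n - Suc (n - (j+1)) = j" using assms by arith
  show ?thesis unfolding REp_def a by (simp only: Epk.simps b qcm_def mult.assoc)
qed

lemma Ep_left: assumes "1 \<le> i" "i + 1 < j" "j \<le> n"
  shows "REp n c r s e i j = qcm (e i) (REp n c r s e (i+1) j) (r^2)"
  using assms
proof (induction "n - j" arbitrary: j)
  case 0
  hence jn: "j = n" by simp
  have c1: "e i * e n = e n * e i" using far(1)[of i n] 0 jn by simp
  have "REp n c r s e i n = qcm (qcm (e i) (RE c r e (i+1) n) (r^2)) (e n) (r*s)"
    using Ep_n RE_step[of i n] 0 jn by simp
  also have "\<dots> = qcm (e i) (qcm (RE c r e (i+1) n) (e n) (r*s)) (r^2)" by (rule G2[OF c1])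
  finally show ?case using jn by (simp add: Ep_n)
next
  case (Suc d)
  hence jn: "j < n" by simp
  have ih: "REp n c r s e i (j+1) = qcm (e i) (REp n c r s e (i+1) (j+1)) (r^2)"
    using Suc by simp
  have c1: "e i * e j = e j * e i" using far(1)[of i j] Suc.prems by simp
  have "REp n c r s e i j = qcm (qcm (e i) (REp n c r s e (i+1) (j+1)) (r^2)) (e j) (inverse (s^2))"
    using Ep_step[OF jn] ih by simp
  also have "\<dots> = qcm (e i) (qcm (REp n c r s e (i+1) (j+1)) (e j) (inverse (s^2))) (r^2)" by (rule G2[OF c1])
  finally show ?case using Ep_step[OF jn, of "i+1"] by simp
qed

lemma Ep_comm: assumes "1 \<le> k" "k + 2 \<le> i" "i \<le> j" "j \<le> n"
  shows "e k * REp n c r s e i j = REp n c r s e i j * e k"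
  using assms
proof (induction "n - j" arbitrary: j)
  case 0
  hence jn: "j = n" by simp
  have a: "e k * RE c r e i n = RE c r e i n * e k" by (rule RE_comm) (use 0 jn in auto)
  have b: "e n * e k = e k * e n" using far(2)[of k n] 0 jn by simp
  have "qcm (RE c r e i n) (e n) (r*s) * e k = e k * qcm (RE c r e i n) (e n) (r*s)"
    by (rule G1) (use a b in auto)
  thus ?case using jn by (simp add: Ep_n)
next
  case (Suc d)
  hence jn: "j < n" by simp
  have ih: "e k * REp n c r s e i (j+1) = REp n c r s e i (j+1) * e k" using Suc by simp
  have b: "e j * e k = e k * e j" using far(2)[of k j] Suc.prems by simp
  have "qcm (REp n c r s e i (j+1)) (e j) (inverse (s^2)) * e k = e k * qcm (REp n c r s e i (j+1)) (e j) (inverse (s^2))"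
    by (rule G1) (use ih b in auto)
  thus ?case using Ep_step[OF jn] by simp
qed

lemma RS1: assumes "2 \<le> m" "m \<le> n - 1" shows "sAp (e (m-1)) (RE c r e m (n-1))"
  using assms
proof (induction "n - 1 - m" arbitrary: m)
  case 0
  hence mm: "m = n - 1" by simp
  have "m - 1 + 1 = m" using 0 by simp
  hence "sAp (e (m-1)) (e m)" using sA[of "m-1"] 0 mm by (simp add: sAp_def)
  thus ?case using mm by (simp add: RE_same)
next
  case (Suc d)
  hence lt: "m < n - 1" by simp
  have ih: "sAp (e m) (RE c r e (m+1) (n-1))" using Suc(1)[of "m+1"] Suc.prems Suc(2) by simp
  have m1: "m - 1 + 1 = m" using Suc.prems by simp
  have sa: "sAp (e (m-1)) (e m)" using sA[of "m-1"] Suc.prems lt m1 by (simp add: sAp_def)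
  have cm: "e (m-1) * RE c r e (m+1) (n-1) = RE c r e (m+1) (n-1) * e (m-1)"
    by (rule RE_comm) (use Suc.prems lt in auto)
  have re: "RE c r e m (n-1) = qcm (e m) (RE c r e (m+1) (n-1)) (r^2)" using RE_step lt by simp
  have h1: "qcm (e (m-1)) (RE c r e (m+1) (n-1)) 1 = 0" using cm by (simp add: qcm_1)
  note h23 = sa[unfolded sAp_def] and h45 = ih[unfolded sAp_def]
  show ?case unfolding re sAp_def
    using A3_lem[OF h1 h23[THEN conjunct1] h23[THEN conjunct2] h45[THEN conjunct1] h45[THEN conjunct2]] by simp
qed

lemma RS2: assumes "1 \<le> m" "m \<le> n - 1" shows "sBp (RE c r e m (n-1)) (e n)"
  using assms
proof (induction "n - 1 - m" arbitrary: m)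
  case 0
  hence mm: "m = n - 1" by simp
  thus ?case using sB by (simp add: RE_same sBp_def)
next
  case (Suc d)
  hence lt: "m < n - 1" by simp
  have ih: "sBp (RE c r e (m+1) (n-1)) (e n)" using Suc(1)[of "m+1"] Suc.prems Suc(2) by simp
  have sa: "sAp (e m) (RE c r e (m+1) (n-1))" using RS1[of "m+1"] Suc.prems lt by simp
  have cm: "e m * e n = e n * e m" using far(1)[of m n] Suc.prems lt by simp
  have re: "RE c r e m (n-1) = qcm (e m) (RE c r e (m+1) (n-1)) (r^2)" using RE_step lt by simp
  have h1: "qcm (e m) (e n) 1 = 0" using cm by (simp add: qcm_1)
  note h23 = sa[unfolded sAp_def] and h45 = ih[unfolded sBp_def]
  show ?case unfolding re sBp_def
    using B3a_lem[OF h1 h23[THEN conjunct1] h23[THEN conjunct2] h45[THEN conjunct1] h45[THEN conjunct2]] by simp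
qed

end



context U begin

lemma B3gen: assumes "2 \<le> j" "j \<le> n - 1"
  shows "qcm (RE c r e (j-1) n) (RE c r e j n) (r*s) = qcm (RE c r e j (n-1)) (REp n c r s e (j-1) n) (r^2)"
    and "qcm (qcm (REp n c r s e (j-1) n) (RE c r e j (n-1)) (inverse (s^2))) (e n) ((r*s)^2) = 0"
    and "qcm (REp n c r s e (j-1) n) (RE c r e j n) 1 = 0"
    and "qcm (REp n c r s e (j-1) n) (REp n c r s e j n) (s^2) = 0"
    and "qcm (qcm (REp n c r s e (j-1) n) (RE c r e j (n-1)) (inverse (s^2))) (RE c r e j n) (s^2) = 0"
    and "qcm (qcm (REp n c r s e (j-1) n) (RE c r e j (n-1)) (inverse (s^2))) (REp n c r s e j n) ((r*s^2)^2) = 0"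
proof -
  have j1: "j - 1 + 1 = j" using assms by simp
  have h1: "qcm (e (j-1)) (e n) 1 = 0" using far_qcm[of "j-1" n] assms by simp
  note h23 = RS1[OF assms, unfolded sAp_def] and h45 = RS2[of j, unfolded sBp_def]
  have h45': "qcm (RE c r e j (n-1)) (qcm (RE c r e j (n-1)) (e n) (r^2)) (s^2) = 0 \<and>
      qcm (qcm (qcm (RE c r e j (n-1)) (e n) (r^2)) (e n) (r*s)) (e n) (s^2) = 0"
    using h45 assms by simp
  note B3 = B3_lem[OF h1 h23[THEN conjunct1] h23[THEN conjunct2] h45'[THEN conjunct1] h45'[THEN conjunct2]]
  have eq1: "qcm (RE c r e j (n-1)) (e n) (r^2) = RE c r e j n" using RE_right[of j n] assms by simp
  have eq2: "qcm (e (j-1)) (RE c r e j n) (r^2) = RE c r e (j-1) n" using RE_step[of "j-1" n] assms j1 by simp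
  have eq3: "qcm (RE c r e (j-1) n) (e n) (r*s) = REp n c r s e (j-1) n" by (simp add: Ep_n)
  have eq4: "qcm (RE c r e j n) (e n) (r*s) = REp n c r s e j n" by (simp add: Ep_n)
  note B3' = B3[unfolded eq1 eq2 eq3 eq4]
  show "qcm (RE c r e (j-1) n) (RE c r e j n) (r*s) = qcm (RE c r e j (n-1)) (REp n c r s e (j-1) n) (r^2)"
    by (rule B3'(1))
  show "qcm (qcm (REp n c r s e (j-1) n) (RE c r e j (n-1)) (inverse (s^2))) (e n) ((r*s)^2) = 0"
    by (rule B3'(2))
  show "qcm (REp n c r s e (j-1) n) (RE c r e j n) 1 = 0" by (rule B3'(3))
  show "qcm (REp n c r s e (j-1) n) (REp n c r s e j n) (s^2) = 0" by (rule B3'(4))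
  show "qcm (qcm (REp n c r s e (j-1) n) (RE c r e j (n-1)) (inverse (s^2))) (RE c r e j n) (s^2) = 0"
    by (rule B3'(5))
  show "qcm (qcm (REp n c r s e (j-1) n) (RE c r e j (n-1)) (inverse (s^2))) (REp n c r s e j n) ((r*s^2)^2) = 0"
    by (rule B3'(6))
qed

lemma B3top: assumes "3 \<le> n"
  shows "qcm (REp n c r s e (n-2) (n-1)) (e n) ((r*s)^2) = 0"
    and "qcm (REp n c r s e (n-2) n) (RE c r e (n-1) n) 1 = 0"
    and "qcm (REp n c r s e (n-2) n) (REp n c r s e (n-1) n) (s^2) = 0"
    and "qcm (REp n c r s e (n-2) (n-1)) (RE c r e (n-1) n) (s^2) = 0"
    and "qcm (REp n c r s e (n-2) (n-1)) (REp n c r s e (n-1) n) ((r*s^2)^2) = 0"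
proof -
  have a: "2 \<le> n - 1" "n - 1 \<le> n - 1" using assms by auto
  have b: "n - 1 - 1 = n - 2" by simp
  have ep: "qcm (REp n c r s e (n-2) n) (e (n-1)) (inverse (s^2)) = REp n c r s e (n-2) (n-1)"
  proof -
    have "n - 1 < n" "n - 1 + 1 = n" using assms by auto
    thus ?thesis using Ep_step[of "n-1" "n-2"] by simp
  qed
  note B = B3gen[OF a, unfolded b RE_same ep]
  show "qcm (REp n c r s e (n-2) (n-1)) (e n) ((r*s)^2) = 0" by (rule B(2))
  show "qcm (REp n c r s e (n-2) n) (RE c r e (n-1) n) 1 = 0" by (rule B(3))
  show "qcm (REp n c r s e (n-2) n) (REp n c r s e (n-1) n) (s^2) = 0" by (rule B(4))
  show "qcm (REp n c r s e (n-2) (n-1)) (RE c r e (n-1) n) (s^2) = 0" by (rule B(5))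
  show "qcm (REp n c r s e (n-2) (n-1)) (REp n c r s e (n-1) n) ((r*s^2)^2) = 0" by (rule B(6))
qed

lemma cl1: assumes "1 \<le> i" "i < j" "j < n"
  shows "qcm (RE c r e i n) (RE c r e j n) (r*s) = qcm (RE c r e j (n-1)) (REp n c r s e i n) (r^2)"
  using assms
proof (induction "j - 1 - i" arbitrary: i)
  case 0
  hence ij: "i = j - 1" "2 \<le> j" "j \<le> n - 1" by auto
  thus ?case using B3gen(1)[OF ij(2,3)] by simp
next
  case (Suc d)
  hence lt: "i + 1 < j" by simp
  have ih: "qcm (RE c r e (i+1) n) (RE c r e j n) (r*s) = qcm (RE c r e j (n-1)) (REp n c r s e (i+1) n) (r^2)"
    using Suc(1)[of "i+1"] Suc.prems Suc(2) lt by simp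
  have c1: "e i * RE c r e j n = RE c r e j n * e i" by (rule RE_comm) (use Suc.prems lt in auto)
  have c2: "e i * RE c r e j (n-1) = RE c r e j (n-1) * e i" by (rule RE_comm) (use Suc.prems lt in auto)
  have r1: "RE c r e i n = qcm (e i) (RE c r e (i+1) n) (r^2)" using RE_step[of i n] Suc.prems by simp
  have r2: "REp n c r s e i n = qcm (e i) (REp n c r s e (i+1) n) (r^2)" using Ep_left[of i n] Suc.prems lt by simp
  show ?case unfolding r1 r2 G2[OF c1] G2'[OF c2] ih ..
qed

lemma cl4: assumes "1 \<le> i" "i < j" "j < n"
  shows "qcm (REp n c r s e i j) (e n) ((r*s)^2) = 0"
proof -
  have n3: "3 \<le> n" using assms by simp
  have base: "qcm (REp n c r s e i (n-1)) (e n) ((r*s)^2) = 0" if "1 \<le> i" "i < n - 1" for i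
    using that
  proof (induction "n - 2 - i" arbitrary: i)
    case 0
    hence "i = n - 2" by simp
    thus ?case using B3top(1)[OF n3] by simp
  next
    case (Suc d)
    hence lt: "i + 1 < n - 1" by simp
    have ih: "qcm (REp n c r s e (i+1) (n-1)) (e n) ((r*s)^2) = 0" using Suc(1)[of "i+1"] Suc(2) Suc.prems lt by simp
    have c1: "e i * e n = e n * e i" using far(1)[of i n] Suc.prems lt by simp
    have r: "REp n c r s e i (n-1) = qcm (e i) (REp n c r s e (i+1) (n-1)) (r^2)"
      using Ep_left[of i "n-1"] Suc.prems lt by simp
    show ?case unfolding r G2[OF c1] ih by (rule qcm_0r)
  qed
  show ?thesis using assms
  proof (induction "n - 1 - j" arbitrary: j)
    case 0
    hence "j = n - 1" by simp
    thus ?case using base 0 by simp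
  next
    case (Suc d)
    hence lt: "j < n - 1" by simp
    have ih: "qcm (REp n c r s e i (j+1)) (e n) ((r*s)^2) = 0" using Suc(1)[of "j+1"] Suc(2) Suc.prems lt by simp
    have c1: "e j * e n = e n * e j" using far(1)[of j n] Suc.prems lt by simp
    have r: "REp n c r s e i j = qcm (REp n c r s e i (j+1)) (e j) (inverse (s^2))"
      using Ep_step[of j i] lt by simp
    show ?case unfolding r G3[OF c1] ih by (rule qcm_0l)
  qed
qed

lemma cl5to8: assumes "1 \<le> i" "i < n - 1"
  shows "qcm (REp n c r s e i n) (RE c r e (n-1) n) 1 = 0"
    and "qcm (REp n c r s e i n) (REp n c r s e (n-1) n) (s^2) = 0"
    and "qcm (REp n c r s e i (n-1)) (RE c r e (n-1) n) (s^2) = 0"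
    and "qcm (REp n c r s e i (n-1)) (REp n c r s e (n-1) n) ((r*s^2)^2) = 0"
proof -
  have n3: "3 \<le> n" using assms by simp
  have "(qcm (REp n c r s e i n) (RE c r e (n-1) n) 1 = 0 \<and>
    qcm (REp n c r s e i n) (REp n c r s e (n-1) n) (s^2) = 0) \<and>
    (qcm (REp n c r s e i (n-1)) (RE c r e (n-1) n) (s^2) = 0 \<and>
    qcm (REp n c r s e i (n-1)) (REp n c r s e (n-1) n) ((r*s^2)^2) = 0)"
    using assms
  proof (induction "n - 2 - i" arbitrary: i)
    case 0
    hence "i = n - 2" by simp
    thus ?case using B3top[OF n3] by simp
  next
    case (Suc d)
    hence lt: "i + 1 < n - 1" by simp
    note ih = Suc(1)[of "i+1"]
    have ih': "(qcm (REp n c r s e (i+1) n) (RE c r e (n-1) n) 1 = 0 \<and>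
      qcm (REp n c r s e (i+1) n) (REp n c r s e (n-1) n) (s^2) = 0) \<and>
      (qcm (REp n c r s e (i+1) (n-1)) (RE c r e (n-1) n) (s^2) = 0 \<and>
      qcm (REp n c r s e (i+1) (n-1)) (REp n c r s e (n-1) n) ((r*s^2)^2) = 0)"
      using ih Suc(2) Suc.prems lt by simp
    have c1: "e i * RE c r e (n-1) n = RE c r e (n-1) n * e i" by (rule RE_comm) (use Suc.prems lt in auto)
    have c2: "e i * REp n c r s e (n-1) n = REp n c r s e (n-1) n * e i" by (rule Ep_comm) (use Suc.prems lt in auto)
    have r1: "REp n c r s e i n = qcm (e i) (REp n c r s e (i+1) n) (r^2)"
      using Ep_left[of i n] Suc.prems lt by simp
    have r2: "REp n c r s e i (n-1) = qcm (e i) (REp n c r s e (i+1) (n-1)) (r^2)"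
      using Ep_left[of i "n-1"] Suc.prems lt by simp
    show ?case unfolding r1 r2 G2[OF c1] G2[OF c2] using ih' by (simp add: qcm_0r)
  qed
  thus "qcm (REp n c r s e i n) (RE c r e (n-1) n) 1 = 0"
    and "qcm (REp n c r s e i n) (REp n c r s e (n-1) n) (s^2) = 0"
    and "qcm (REp n c r s e i (n-1)) (RE c r e (n-1) n) (s^2) = 0"
    and "qcm (REp n c r s e i (n-1)) (REp n c r s e (n-1) n) ((r*s^2)^2) = 0" by auto
qed

lemma cl3: "qcm (RE c r e (n-1) n) (REp n c r s e (n-1) n) (s^2) = 0"
proof -
  have a: "RE c r e (n-1) n = qcm (e (n-1)) (e n) (r^2)"
  proof -
    have "n - 1 < n" "n - 1 + 1 = n" using n2 by auto
    thus ?thesis using RE_step[of "n-1" n] by (simp add: RE_same)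
  qed
  show ?thesis unfolding Ep_n a using B2_lem[OF sB(1) sB(2)] .
qed

end



context U begin

lemma L2base: assumes "2 \<le> l" "l + 2 \<le> m" "m \<le> n"
  shows "e l * REp n c r s e (l-1) m = REp n c r s e (l-1) m * e l"
  using assms
proof (induction "n - m" arbitrary: m)
  case 0
  hence mn: "m = n" by simp
  have l1: "l - 1 + 1 = l" using assms by simp
  have h1: "qcm (e (l-1)) (RE c r e (l+1) (n-1)) 1 = 0"
  proof -
    have "e (l-1) * RE c r e (l+1) (n-1) = RE c r e (l+1) (n-1) * e (l-1)"
      by (rule RE_comm) (use 0 mn in auto)
    thus ?thesis by (simp add: qcm_1)
  qed
  have h2: "qcm (e (l-1)) (e n) 1 = 0" using far_qcm[of "l-1" n] 0 mn by simp
  have h3: "qcm (e l) (e n) 1 = 0" using far_qcm[of l n] 0 mn by simp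
  have sa: "qcm (e (l-1)) (qcm (e (l-1)) (e l) (r^2)) (s^2) = 0" "qcm (qcm (e (l-1)) (e l) (r^2)) (e l) (s^2) = 0"
    using sA[of "l-1"] 0 mn l1 by auto
  have r1: "sAp (e l) (RE c r e (l+1) (n-1))" using RS1[of "l+1"] 0 mn by simp
  have r2: "sBp (RE c r e (l+1) (n-1)) (e n)" using RS2[of "l+1"] 0 mn by simp
  note B = B4_lem[OF h1 h2 h3 sa r1[unfolded sAp_def, THEN conjunct1] r1[unfolded sAp_def, THEN conjunct2]
      r2[unfolded sBp_def, THEN conjunct1] r2[unfolded sBp_def, THEN conjunct2]]
  have eq1: "qcm (RE c r e (l+1) (n-1)) (e n) (r^2) = RE c r e (l+1) n"
    using RE_right[of "l+1" n] 0 mn by simp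
  have eq2: "qcm (e l) (RE c r e (l+1) n) (r^2) = RE c r e l n" using RE_step[of l n] 0 mn by simp
  have eq3: "qcm (e (l-1)) (RE c r e l n) (r^2) = RE c r e (l-1) n" using RE_step[of "l-1" n] 0 mn l1 by simp
  have eq4: "qcm (RE c r e (l-1) n) (e n) (r*s) = REp n c r s e (l-1) n" by (simp add: Ep_n)
  have "qcm (e l) (REp n c r s e (l-1) n) 1 = 0" using B[unfolded eq1 eq2 eq3 eq4] .
  thus ?case using mn by (simp add: qcm_1)
next
  case (Suc d)
  hence lt: "m < n" by simp
  have ih: "e l * REp n c r s e (l-1) (m+1) = REp n c r s e (l-1) (m+1) * e l"
    using Suc(1)[of "m+1"] Suc(2) Suc.prems lt by simp
  have b: "e m * e l = e l * e m" using far(2)[of l m] Suc.prems by simp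
  have "qcm (REp n c r s e (l-1) (m+1)) (e m) (inverse (s^2)) * e l = e l * qcm (REp n c r s e (l-1) (m+1)) (e m) (inverse (s^2))"
    by (rule G1) (use ih b in auto)
  thus ?case using Ep_step[OF lt, of "l-1"] by simp
qed

lemma L2: assumes "1 \<le> i" "i < l" "l + 2 \<le> m" "m \<le> n"
  shows "e l * REp n c r s e i m = REp n c r s e i m * e l"
  using assms
proof (induction "l - 1 - i" arbitrary: i)
  case 0
  hence "i = l - 1" "2 \<le> l" by auto
  thus ?case using L2base[of l m] 0 by simp
next
  case (Suc d)
  hence lt: "i + 1 < l" by simp
  have ih: "e l * REp n c r s e (i+1) m = REp n c r s e (i+1) m * e l"
    using Suc(1)[of "i+1"] Suc(2) Suc.prems lt by simp
  have b: "e i * e l = e l * e i" using far(1)[of i l] Suc.prems lt by simp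
  have "qcm (e i) (REp n c r s e (i+1) m) (r^2) * e l = e l * qcm (e i) (REp n c r s e (i+1) m) (r^2)"
    by (rule G1) (use ih b in auto)
  thus ?case using Ep_left[of i m] Suc.prems lt by simp
qed

lemma BP: assumes "1 \<le> i" "i < j" "j \<le> k" "k + 2 \<le> m" "m \<le> n"
  shows "RE c r e j k * REp n c r s e i m = REp n c r s e i m * RE c r e j k"
  using assms
proof (induction "k - j" arbitrary: j)
  case 0
  hence "j = k" by simp
  thus ?case using L2[of i k m] 0 by (simp add: RE_same)
next
  case (Suc d)
  hence lt: "j < k" by simp
  have ih: "RE c r e (j+1) k * REp n c r s e i m = REp n c r s e i m * RE c r e (j+1) k"
    using Suc(1)[of "j+1"] Suc(2) Suc.prems lt by simp
  have b: "e j * REp n c r s e i m = REp n c r s e i m * e j" using L2[of i j m] Suc.prems by simp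
  have "qcm (e j) (RE c r e (j+1) k) (r^2) * REp n c r s e i m = REp n c r s e i m * qcm (e j) (RE c r e (j+1) k) (r^2)"
    by (rule G1) (use ih b in auto)
  thus ?case using RE_step[OF lt] by simp
qed

lemma cl2: assumes "1 \<le> i" "i < j" "j < k" "k < n - 1"
  shows "qcm (RE c r e j k) (REp n c r s e i (k+1)) (r^2) = qcm (REp n c r s e i (k+2)) (RE c r e j (k+1)) (inverse (s^2))"
proof -
  have bp: "RE c r e j k * REp n c r s e i (k+2) = REp n c r s e i (k+2) * RE c r e j k"
    by (rule BP) (use assms in auto)
  have r1: "RE c r e j (k+1) = qcm (RE c r e j k) (e (k+1)) (r^2)" using RE_right[of j "k+1"] assms by simp
  have r2: "REp n c r s e i (k+1) = qcm (REp n c r s e i (k+2)) (e (k+1)) (inverse (s^2))"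
    using Ep_step[of "k+1" i] assms by simp
  show ?thesis unfolding r1 r2 by (rule G5[OF bp])
qed

end

theorem lemma3p4:
  fixes n :: nat and r s :: complex and c :: "complex \<Rightarrow> 'a::ring_1"
    and e f w wp winv wpinv :: "nat \<Rightarrow> 'a"
  assumes "n \<ge> 2" and "r \<noteq> 0" and "s \<noteq> 0" and "r^3 \<noteq> s^3" and "r^4 \<noteq> s^4"
    and "Urs_rel n r s c e f w wp winv wpinv"
  shows
   "(\<forall>i j. 1 \<le> i \<and> i < j \<and> j < n \<longrightarrow>
       RE c r e i n * RE c r e j n - c (r * s) * RE c r e j n * RE c r e i n
     = RE c r e j (n - 1) * REp n c r s e i n - c (r^2) * REp n c r s e i n * RE c r e j (n - 1))
  \<and> (\<forall>i j k. 1 \<le> i \<and> i < j \<and> j < k \<and> k < n - 1 \<longrightarrow>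
       RE c r e j k * REp n c r s e i (k + 1) - c (r^2) * REp n c r s e i (k + 1) * RE c r e j k
     = REp n c r s e i (k + 2) * RE c r e j (k + 1)
       - c (inverse (s^2)) * RE c r e j (k + 1) * REp n c r s e i (k + 2))
  \<and> RE c r e (n - 1) n * REp n c r s e (n - 1) n
      = c (s^2) * REp n c r s e (n - 1) n * RE c r e (n - 1) n
  \<and> (\<forall>i j. 1 \<le> i \<and> i < j \<and> j < n \<longrightarrow>
       REp n c r s e i j * e n = c ((r * s)^2) * e n * REp n c r s e i j)
  \<and> (\<forall>i. 1 \<le> i \<and> i < n - 1 \<longrightarrow>
       REp n c r s e i n * RE c r e (n - 1) n = RE c r e (n - 1) n * REp n c r s e i n)
  \<and> (\<forall>i. 1 \<le> i \<and> i < n - 1 \<longrightarrow>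
       REp n c r s e i n * REp n c r s e (n - 1) n
       = c (s^2) * REp n c r s e (n - 1) n * REp n c r s e i n)
  \<and> (\<forall>i. 1 \<le> i \<and> i < n - 1 \<longrightarrow>
       REp n c r s e i (n - 1) * RE c r e (n - 1) n
       = c (s^2) * RE c r e (n - 1) n * REp n c r s e i (n - 1))
  \<and> (\<forall>i. 1 \<le> i \<and> i < n - 1 \<longrightarrow>
       REp n c r s e i (n - 1) * REp n c r s e (n - 1) n
       = c ((r * s^2)^2) * REp n c r s e (n - 1) n * REp n c r s e i (n - 1))"
proof -
  have se: "scalar_emb c" using assms(6) unfolding Urs_rel_def by blast
  interpret U c r s n e f w wp winv wpinv
    by unfold_locales (use assms se in auto)
  have q0: "x * y = c q * y * x" if "qcm x y q = 0" for x y q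
    using that by (simp add: qcm_def mult.assoc)
  have q1: "x * y - c q * y * x = qcm x y q" for x y q by (simp add: qcm_def mult.assoc)
  have q2: "x * y = y * x" if "qcm x y 1 = 0" for x y
    using that by (simp add: qcm_1)
  show ?thesis
  proof (intro conjI allI impI)
    fix i j assume "1 \<le> i \<and> i < j \<and> j < n"
    thus "RE c r e i n * RE c r e j n - c (r * s) * RE c r e j n * RE c r e i n
     = RE c r e j (n - 1) * REp n c r s e i n - c (r^2) * REp n c r s e i n * RE c r e j (n - 1)"
      unfolding q1 using cl1 by blast
  next
    fix i j k assume "1 \<le> i \<and> i < j \<and> j < k \<and> k < n - 1"
    thus "RE c r e j k * REp n c r s e i (k + 1) - c (r^2) * REp n c r s e i (k + 1) * RE c r e j k
     = REp n c r s e i (k + 2) * RE c r e j (k + 1)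
       - c (inverse (s^2)) * RE c r e j (k + 1) * REp n c r s e i (k + 2)"
      unfolding q1 using cl2 by blast
  next
    show "RE c r e (n - 1) n * REp n c r s e (n - 1) n
      = c (s^2) * REp n c r s e (n - 1) n * RE c r e (n - 1) n"
      by (rule q0[OF cl3])
  next
    fix i j assume "1 \<le> i \<and> i < j \<and> j < n"
    thus "REp n c r s e i j * e n = c ((r * s)^2) * e n * REp n c r s e i j"
      using q0[OF cl4] by blast
  next
    fix i assume "1 \<le> i \<and> i < n - 1"
    thus "REp n c r s e i n * RE c r e (n - 1) n = RE c r e (n - 1) n * REp n c r s e i n"
      using q2[OF cl5to8(1)] by blast
  next
    fix i assume "1 \<le> i \<and> i < n - 1"
    thus "REp n c r s e i n * REp n c r s e (n - 1) n
       = c (s^2) * REp n c r s e (n - 1) n * REp n c r s e i n"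
      using q0[OF cl5to8(2)] by blast
  next
    fix i assume "1 \<le> i \<and> i < n - 1"
    thus "REp n c r s e i (n - 1) * RE c r e (n - 1) n
       = c (s^2) * RE c r e (n - 1) n * REp n c r s e i (n - 1)"
      using q0[OF cl5to8(3)] by blast
  next
    fix i assume "1 \<le> i \<and> i < n - 1"
    thus "REp n c r s e i (n - 1) * REp n c r s e (n - 1) n
       = c ((r * s^2)^2) * REp n c r s e (n - 1) n * REp n c r s e i (n - 1)"
      using q0[OF cl5to8(4)] by blast
  qed
qed


end
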